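(* Assume that the random variables $g_i(\theta)\tau_i$ and $h_i(\eta)\tau_i$ are integrable for every $i\ge1$, where $g_i(\theta)=\sup_{j}\|f_{ij}(\theta)Z_{ij}(\theta)\|$ and $h_i(\eta)=\sup_j|b_{ij}(\eta)(Z_{ij}^2(\theta)-\sigma^2)|$, and that conditions $(B_{f(\theta)})$ and $(B_{b(\eta)})$ hold. Then the observed estimating functions $$g_{n,1}^{obs}(\theta)=\sum_{i=1}^n\sum_{j=1}^{\tau_i}\Big(f_{ij}(\theta)Z_{ij}(\theta)I_{ij}^{obs}+f_{ij}(\theta)I_{ij}^{cen}\frac{E_\theta[Z_{ij}(\theta)I_{ij}^{cen}]}{E_\theta[I_{ij}^{cen}]}\Big),$$ $$g_{n,2}^{obs}(\eta)=\sum_{i=1}^n\sum_{j=1}^{\tau_i}\Big(b_{ij}(\eta)(Z_{ij}^2(\theta)-\sigma^2)I_{ij}^{obs}+b_{ij}(\eta)I_{ij}^{cen}\frac{E_\eta[(Z_{ij}^2(\theta)-\sigma^2)I_{ij}^{cen}]}{E_\eta[I_{ij}^{cen}]}\Big)$$ are unbiased: $E_\theta[g_{n,1}^{obs}(\theta)]=0$ and $E_\eta[g_{n,2}^{obs}(\eta)]=0$ for all $n\ge1$.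
   Context: Let $(\Omega,\mathcal F)$ be a measurable space carrying probability measures $P_\eta$, $\eta=(\theta^T,\sigma^2)^T\in K\subset\mathbb R^{p+1}$ with $K$ compact; $E_\eta$ ($E_\theta$) is expectation under $P_\eta$. For each subject $i\ge1$: event times $0=S_{i0}<S_{i1}<\cdots$, censoring time $0<C_i<\infty$, random covariates $x_{ij}$; the data vectors $(S_{ij},x_{ij},C_i;\ j\ge1)$ are i.i.d. over $i$. $\mathcal F_{ij}=\sigma\{S_{il}\ (0\le l\le j);x_{il}\ (1\le l\le j+1)\}$, $\mathcal G_{ij}=\sigma\{\mathcal F_{ij},\{S_{ik}\le C_i\},\{S_{ik}=C_i\}\ (1\le k\le j)\}$, $\mathcal G_{i0}=\mathcal F_{i0}$. Gap times $Y_{ij}=S_{ij}-S_{i,j-1}$ have finite second moments and, for every $\eta$, $E_\theta[Y_{ij}\mid\mathcal F_{i,j-1}]=\mu_{ij}(\theta)$, $\mathrm{var}_\eta[Y_{ij}\mid\mathcal F_{i,j-1}]=\sigma^2V_{ij}^2(\theta)$ with known $\mu_{ij}(\theta)$, $V_{ij}(\theta)>0$ depending on $\theta$ and $\mathcal F_{i,j-1}$-measurable quantities, differentiable in $\theta$. Standing assumption (A): the same two conditional moment identities hold with $\mathcal F_{i,j-1}$ replaced by $\mathcal G_{i,j-1}$. $f_{ij}(\theta)=V_{ij}^{-1}(\theta)\partial\mu_{ij}(\theta)/\partial\theta$, $Z_{ij}(\theta)=(Y_{ij}-\mu_{ij}(\theta))/V_{ij}(\theta)$, $E[Z_{ij}^2]<\infty$;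 $b_{ij}(\eta)$ are real $\mathcal F_{i,j-1}$-measurable random variables. $\tau_i=\min\{j\ge1:C_i\le S_{ij}\}$, assumed finite a.s. Indicators: $I_{ij}^{obs}=I\{S_{ij}\le C_i\}$, $I_{ij}^{cen}=I\{S_{i,j-1}<C_i<S_{ij}\}$. Terms with $E[I_{ij}^{cen}]=0$ are discarded (taken as $0$). Define $\mathcal O(f_i(\theta))=\sigma(f_{ij}(\theta)I_{ij}^{cen},I_{ij}^{cen},\ j\ge1)$ and $\mathcal O(b_i(\eta))=\sigma(b_{ij}(\eta)I_{ij}^{cen},I_{ij}^{cen},\ j\ge1)$. Condition $(B_{f(\theta)})$: $I_{ij}^{cen}E_\theta[Z_{ij}(\theta)\mid\mathcal O(f_i(\theta))]=I_{ij}^{cen}E_\theta[Z_{ij}(\theta)\mid I_{ij}^{cen}]$ for all $i,j$. Condition $(B_{b(\eta)})$ is the same with $\mathcal O(f_i(\theta))$ replaced by $\mathcal O(b_i(\eta))$. *)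

theory Defs
  imports "HOL-Probability.Probability"
begin

definition rv_events :: "'w measure \<Rightarrow> ('w \<Rightarrow> 'a) \<Rightarrow> 'a measure \<Rightarrow> 'w set set" where
  "rv_events M X N = {X -` A \<inter> space M | A. A \<in> sets N}"

definition F_alg :: "'w measure \<Rightarrow> 'c measure \<Rightarrow> (nat \<Rightarrow> nat \<Rightarrow> 'w \<Rightarrow> real)
    \<Rightarrow> (nat \<Rightarrow> nat \<Rightarrow> 'w \<Rightarrow> 'c) \<Rightarrow> nat \<Rightarrow> nat \<Rightarrow> 'w measure" where
  "F_alg M N S x i j = sigma (space M)
     ((\<Union>l\<in>{0..j}. rv_events M (S i l) borel) \<union> (\<Union>l\<in>{1..j+1}. rv_events M (x i l) N))"

definition G_alg :: "'w measure \<Rightarrow> 'c measure \<Rightarrow> (nat \<Rightarrow> nat \<Rightarrow> 'w \<Rightarrow> real)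
    \<Rightarrow> (nat \<Rightarrow> nat \<Rightarrow> 'w \<Rightarrow> 'c) \<Rightarrow> (nat \<Rightarrow> 'w \<Rightarrow> real) \<Rightarrow> nat \<Rightarrow> nat \<Rightarrow> 'w measure" where
  "G_alg M N S x C i j = sigma (space M)
     ((\<Union>l\<in>{0..j}. rv_events M (S i l) borel) \<union> (\<Union>l\<in>{1..j+1}. rv_events M (x i l) N)
      \<union> (\<Union>k\<in>{1..j}. {{\<omega>\<in>space M. S i k \<omega> \<le> C i \<omega>}, {\<omega>\<in>space M. S i k \<omega> = C i \<omega>}}))"

definition gap :: "(nat \<Rightarrow> nat \<Rightarrow> 'w \<Rightarrow> real) \<Rightarrow> nat \<Rightarrow> nat \<Rightarrow> 'w \<Rightarrow> real" where
  "gap S i j \<omega> = S i j \<omega> - S i (j - 1) \<omega>"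

definition Zres :: "(nat \<Rightarrow> nat \<Rightarrow> 'w \<Rightarrow> real) \<Rightarrow> (nat \<Rightarrow> nat \<Rightarrow> 't \<Rightarrow> 'w \<Rightarrow> real)
    \<Rightarrow> (nat \<Rightarrow> nat \<Rightarrow> 't \<Rightarrow> 'w \<Rightarrow> real) \<Rightarrow> 't \<Rightarrow> nat \<Rightarrow> nat \<Rightarrow> 'w \<Rightarrow> real" where
  "Zres S mu V \<theta> i j \<omega> = (gap S i j \<omega> - mu i j \<theta> \<omega>) / V i j \<theta> \<omega>"

definition fgrad :: "(nat \<Rightarrow> nat \<Rightarrow> real^'p \<Rightarrow> 'w \<Rightarrow> real) \<Rightarrow> (nat \<Rightarrow> nat \<Rightarrow> real^'p \<Rightarrow> 'w \<Rightarrow> real)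
    \<Rightarrow> real^'p \<Rightarrow> nat \<Rightarrow> nat \<Rightarrow> 'w \<Rightarrow> real^'p" where
  "fgrad mu V \<theta> i j \<omega> = (1 / V i j \<theta> \<omega>) *\<^sub>R
     (\<chi> k. frechet_derivative (\<lambda>t. mu i j t \<omega>) (at \<theta>) (axis k 1))"

definition tau :: "(nat \<Rightarrow> nat \<Rightarrow> 'w \<Rightarrow> real) \<Rightarrow> (nat \<Rightarrow> 'w \<Rightarrow> real) \<Rightarrow> nat \<Rightarrow> 'w \<Rightarrow> nat" where
  "tau S C i \<omega> = (LEAST j. 1 \<le> j \<and> C i \<omega> \<le> S i j \<omega>)"

definition Iobs :: "(nat \<Rightarrow> nat \<Rightarrow> 'w \<Rightarrow> real) \<Rightarrow> (nat \<Rightarrow> 'w \<Rightarrow> real) \<Rightarrow> nat \<Rightarrow> nat \<Rightarrow> 'w \<Rightarrow> real" where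
  "Iobs S C i j \<omega> = (if S i j \<omega> \<le> C i \<omega> then 1 else 0)"

definition Icen :: "(nat \<Rightarrow> nat \<Rightarrow> 'w \<Rightarrow> real) \<Rightarrow> (nat \<Rightarrow> 'w \<Rightarrow> real) \<Rightarrow> nat \<Rightarrow> nat \<Rightarrow> 'w \<Rightarrow> real" where
  "Icen S C i j \<omega> = (if S i (j - 1) \<omega> < C i \<omega> \<and> C i \<omega> < S i j \<omega> then 1 else 0)"

definition O_alg :: "'w measure \<Rightarrow> (nat \<Rightarrow> nat \<Rightarrow> 'w \<Rightarrow> 'v::{real_vector,topological_space})
    \<Rightarrow> (nat \<Rightarrow> nat \<Rightarrow> 'w \<Rightarrow> real) \<Rightarrow> nat \<Rightarrow> 'w measure" where
  "O_alg M g I i = sigma (space M)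
     (\<Union>j\<in>{1..}. rv_events M (\<lambda>\<omega>. I i j \<omega> *\<^sub>R g i j \<omega>) borel \<union> rv_events M (I i j) borel)"

definition sig_rv :: "'w measure \<Rightarrow> ('w \<Rightarrow> real) \<Rightarrow> 'w measure" where
  "sig_rv M X = sigma (space M) (rv_events M X borel)"

definition gobs1 :: "'w measure \<Rightarrow> (nat \<Rightarrow> nat \<Rightarrow> 'w \<Rightarrow> real) \<Rightarrow> (nat \<Rightarrow> 'w \<Rightarrow> real)
    \<Rightarrow> (nat \<Rightarrow> nat \<Rightarrow> real^'p \<Rightarrow> 'w \<Rightarrow> real) \<Rightarrow> (nat \<Rightarrow> nat \<Rightarrow> real^'p \<Rightarrow> 'w \<Rightarrow> real)
    \<Rightarrow> real^'p \<Rightarrow> nat \<Rightarrow> 'w \<Rightarrow> real^'p" where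
  "gobs1 M S C mu V \<theta> n \<omega> =
     (\<Sum>i=1..n. \<Sum>j=1..tau S C i \<omega>.
        (Zres S mu V \<theta> i j \<omega> * Iobs S C i j \<omega>) *\<^sub>R fgrad mu V \<theta> i j \<omega>
      + (Icen S C i j \<omega> * ((\<integral>\<omega>'. Zres S mu V \<theta> i j \<omega>' * Icen S C i j \<omega>' \<partial>M)
                             / (\<integral>\<omega>'. Icen S C i j \<omega>' \<partial>M))) *\<^sub>R fgrad mu V \<theta> i j \<omega>)"

text \<open>observed estimating function g^obs_{n,2}(eta), eta = (theta, sigma^2)\<close>
definition gobs2 :: "'w measure \<Rightarrow> (nat \<Rightarrow> nat \<Rightarrow> 'w \<Rightarrow> real) \<Rightarrow> (nat \<Rightarrow> 'w \<Rightarrow> real)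
    \<Rightarrow> (nat \<Rightarrow> nat \<Rightarrow> 't \<Rightarrow> 'w \<Rightarrow> real) \<Rightarrow> (nat \<Rightarrow> nat \<Rightarrow> 't \<Rightarrow> 'w \<Rightarrow> real)
    \<Rightarrow> (nat \<Rightarrow> nat \<Rightarrow> 'w \<Rightarrow> real) \<Rightarrow> 't \<Rightarrow> real \<Rightarrow> nat \<Rightarrow> 'w \<Rightarrow> real" where
  "gobs2 M S C mu V b \<theta> \<sigma>2 n \<omega> =
     (\<Sum>i=1..n. \<Sum>j=1..tau S C i \<omega>.
        b i j \<omega> * ((Zres S mu V \<theta> i j \<omega>)\<^sup>2 - \<sigma>2) * Iobs S C i j \<omega>
      + b i j \<omega> * Icen S C i j \<omega> *
          ((\<integral>\<omega>'. ((Zres S mu V \<theta> i j \<omega>')\<^sup>2 - \<sigma>2) * Icen S C i j \<omega>' \<partial>M)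
             / (\<integral>\<omega>'. Icen S C i j \<omega>' \<partial>M)))"

end

theory Submission
  imports Defs
begin

lemma pspace_sfs:
  assumes "prob_space M" "subalgebra M F"
  shows "sigma_finite_subalgebra M F"
proof -
  interpret prob_space M by fact
  have "finite_measure_subalgebra M F"
    by (simp add: finite_measure_subalgebra_def finite_measure_subalgebra_axioms_def assms(2) finite_measure_axioms)
  then show ?thesis by (rule finite_measure_subalgebra_is_sigma_finite)
qed

lemma sigma_subalg:
  assumes "A \<subseteq> sets M"
  shows "subalgebra M (sigma (space M) A)"
proof -
  have A: "A \<subseteq> Pow (space M)" using assms sets.sets_into_space by blast
  show ?thesis unfolding subalgebra_def
    using assms A by (simp add: sets_measure_of sets.sigma_sets_subset)
qed

lemma rv_events_sub:
  assumes "X \<in> measurable M N"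
  shows "rv_events M X N \<subseteq> sets M"
  using assms unfolding rv_events_def by (auto intro: measurable_sets)

lemma rv_events_pow: "rv_events M X N \<subseteq> Pow (space M)"
  unfolding rv_events_def by auto

lemma rv_meas_sigma:
  assumes "rv_events M X N \<subseteq> A" "A \<subseteq> Pow (space M)" "\<And>w. w \<in> space M \<Longrightarrow> X w \<in> space N"
  shows "X \<in> measurable (sigma (space M) A) N"
  unfolding measurable_def
proof (safe)
  fix w assume "w \<in> space (sigma (space M) A)"
  then show "X w \<in> space N" using assms(3) by (simp add: space_measure_of_conv)
next
  fix B assume "B \<in> sets N"
  then have "X -` B \<inter> space M \<in> A" using assms(1) unfolding rv_events_def by auto
  then show "X -` B \<inter> space (sigma (space M) A) \<in> sets (sigma (space M) A)"
    using assms(2) by (simp add: sets_measure_of)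
qed

lemma set_in_sigma:
  assumes "B \<in> A" "A \<subseteq> Pow (space M)"
  shows "B \<in> sets (sigma (space M) A)"
  using assms by (simp add: sets_measure_of)

lemma sigma_sets_mono_sub:
  assumes "A \<subseteq> B" "B \<subseteq> Pow (space M)"
  shows "subalgebra (sigma (space M) B) (sigma (space M) A)"
  unfolding subalgebra_def using assms
  by (simp add: sets_measure_of sigma_sets_mono')

lemma sets_sig_rv: "sets (sig_rv M X) = {X -` A \<inter> space M | A. A \<in> sets borel}"
proof -
  have "sets (sig_rv M X) = sets (vimage_algebra (space M) X borel)"
    unfolding sig_rv_def rv_events_def sets_vimage_algebra
    by (rule sets_measure_of) auto
  also have "\<dots> = {X -` A \<inter> space M | A. A \<in> sets borel}"
    by (rule sets_vimage_algebra2) auto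
  finally show ?thesis .
qed

lemma space_sig_rv[simp]: "space (sig_rv M X) = space M"
  unfolding sig_rv_def by (simp add: space_measure_of_conv)

lemma sig_rv_subalg: "X \<in> borel_measurable M \<Longrightarrow> subalgebra M (sig_rv M X)"
  unfolding sig_rv_def by (intro sigma_subalg rv_events_sub)

lemma sig_rv_cexp:
  assumes P: "prob_space M" and Xm[measurable]: "X \<in> borel_measurable M"
    and X01: "\<And>w. w \<in> space M \<Longrightarrow> X w = 0 \<or> X w = 1"
    and Wi: "integrable M W"
  shows "AE w in M. X w * real_cond_exp M (sig_rv M X) W w = X w * ((\<integral>w. W w * X w \<partial>M) / (\<integral>w. X w \<partial>M))"
proof -
  interpret prob_space M by fact
  interpret sigma_finite_subalgebra M "sig_rv M X"
    by (intro pspace_sfs P sig_rv_subalg Xm)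
  define \<psi> where "\<psi> = real_cond_exp M (sig_rv M X) W"
  have psim: "\<psi> \<in> borel_measurable (sig_rv M X)" unfolding \<psi>_def by simp
  have const: "\<psi> w1 = \<psi> w2" if "w1 \<in> space M" "w2 \<in> space M" "X w1 = X w2" for w1 w2
  proof -
    have "\<psi> -` {\<psi> w1} \<inter> space (sig_rv M X) \<in> sets (sig_rv M X)"
      by (rule measurable_sets[OF psim]) simp
    then obtain B where B: "\<psi> -` {\<psi> w1} \<inter> space M = X -` B \<inter> space M"
      unfolding sets_sig_rv by auto
    have "w1 \<in> X -` B" using B that by blast
    then have "w2 \<in> X -` B \<inter> space M" using that by auto
    then have "w2 \<in> \<psi> -` {\<psi> w1} \<inter> space M" using B by simp
    then show ?thesis by simp
  qed
  define A where "A = {w \<in> space M. X w = 1}"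
  have A_M[measurable]: "A \<in> sets M" unfolding A_def by measurable
  have A_sig: "A \<in> sets (sig_rv M X)"
  proof -
    have "A = X -` {1} \<inter> space M" unfolding A_def by auto
    then have "A \<in> rv_events M X borel" unfolding rv_events_def by auto
    then show ?thesis unfolding sig_rv_def by (intro set_in_sigma rv_events_pow)
  qed
  have Xind: "X w = indicator A w" if "w \<in> space M" for w
    using X01[OF that] that unfolding A_def by (auto simp: indicator_def)
  have intX: "(\<integral>w. X w \<partial>M) = measure M A"
    by (subst Bochner_Integration.integral_cong[OF refl Xind]) auto
  have intWX: "(\<integral>w. W w * X w \<partial>M) = (\<integral>w\<in>A. W w \<partial>M)"
    unfolding set_lebesgue_integral_def by (intro Bochner_Integration.integral_cong) (auto simp: Xind)
  show ?thesis
  proof (cases "A = {}")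
    case True
    then have "X w = 0" if "w \<in> space M" for w using Xind[OF that] by simp
    then show ?thesis by (intro AE_I2) simp
  next
    case False
    then obtain w0 where w0: "w0 \<in> A" by blast
    define \<kappa> where "\<kappa> = \<psi> w0"
    have psiA: "\<psi> w = \<kappa>" if "w \<in> A" for w
      unfolding \<kappa>_def using w0 that const unfolding A_def by auto
    have "(\<integral>w\<in>A. W w \<partial>M) = (\<integral>w\<in>A. \<psi> w \<partial>M)"
      unfolding \<psi>_def by (rule real_cond_exp_intA[OF Wi A_sig])
    also have "\<dots> = (\<integral>w\<in>A. \<kappa> \<partial>M)"
      by (intro set_lebesgue_integral_cong) (auto simp: psiA)
    also have "\<dots> = measure M A * \<kappa>" unfolding set_lebesgue_integral_def by (simp add: mult.commute)
    finally have key: "(\<integral>w. W w * X w \<partial>M) = measure M A * \<kappa>" using intWX by simp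
    show ?thesis
    proof (cases "measure M A = 0")
      case True
      then have "AE w in M. w \<notin> A"
      proof -
        have "{x \<in> space M. x \<in> A} = A" using sets.sets_into_space[OF A_M] by auto
        moreover have "emeasure M A = 0" using True by (simp add: emeasure_eq_measure)
        ultimately show ?thesis using A_M
          by (subst AE_iff_measurable[OF _ refl]) simp_all
      qed
      moreover have "X w * real_cond_exp M (sig_rv M X) W w = X w * ((\<integral>w. W w * X w \<partial>M) / (\<integral>w. X w \<partial>M))"
        if "w \<in> space M" "w \<notin> A" for w
      proof -
        have "X w = 0" using Xind[OF that(1)] that(2) by simp
        then show ?thesis by simp
      qed
      ultimately show ?thesis by (auto elim: AE_mp intro: AE_I2)
    next
      case False
      have kap: "\<kappa> = (\<integral>w. W w * X w \<partial>M) / (\<integral>w. X w \<partial>M)" using key intX False by simp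
      have "X w * real_cond_exp M (sig_rv M X) W w = X w * ((\<integral>w. W w * X w \<partial>M) / (\<integral>w. X w \<partial>M))"
        if "w \<in> space M" for w
      proof (cases "w \<in> A")
        case True
        then show ?thesis using psiA[OF True] kap unfolding \<psi>_def by simp
      next
        case False
        then have "X w = 0" using Xind[OF that] by simp
        then show ?thesis by simp
      qed
      then show ?thesis by (intro AE_I2)
    qed
  qed
qed

lemma term_j:
  fixes M G Om :: "'w measure" and f W Io Ic :: "'w \<Rightarrow> real"
  assumes P: "prob_space M"
    and G_sub: "subalgebra M G" and O_sub: "subalgebra M Om"
    and A_G: "A \<in> sets G"
    and IoIc: "\<And>w. w \<in> space M \<Longrightarrow> Io w + Ic w = indicator A w"
    and Io0: "\<And>w. w \<in> space M \<Longrightarrow> 0 \<le> Io w"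
    and Ic01: "\<And>w. w \<in> space M \<Longrightarrow> Ic w = 0 \<or> Ic w = 1"
    and Io_meas[measurable]: "Io \<in> borel_measurable M"
    and Ic_O: "Ic \<in> borel_measurable Om"
    and f_G: "f \<in> borel_measurable G"
    and W_meas[measurable]: "W \<in> borel_measurable M" and W_int: "integrable M W"
    and W_ce: "AE w in M. real_cond_exp M G W w = 0"
    and fO: "(\<lambda>w. Ic w * f w) \<in> borel_measurable Om"
    and B: "AE w in M. Ic w * real_cond_exp M Om W w = Ic w * real_cond_exp M (sig_rv M Ic) W w"
    and intA: "integrable M (\<lambda>w. \<bar>f w * W w\<bar> * indicator A w)"
  defines "c \<equiv> (\<integral>w. W w * Ic w \<partial>M) / (\<integral>w. Ic w \<partial>M)"
  shows "integrable M (\<lambda>w. f w * W w * Io w + f w * Ic w * c)"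
    and "(\<integral>w. f w * W w * Io w + f w * Ic w * c \<partial>M) = 0"
    and "(\<integral>w. \<bar>f w * W w * Io w + f w * Ic w * c\<bar> \<partial>M) \<le> (\<integral>w. \<bar>f w * W w\<bar> * indicator A w \<partial>M)"
proof -
  have cG: "sigma_finite_subalgebra M G" by (rule pspace_sfs[OF P G_sub])
  have cO: "sigma_finite_subalgebra M Om" by (rule pspace_sfs[OF P O_sub])
  have fM[measurable]: "f \<in> borel_measurable M" by (rule measurable_from_subalg[OF G_sub f_G])
  have IcM[measurable]: "Ic \<in> borel_measurable M" by (rule measurable_from_subalg[OF O_sub Ic_O])
  have AM[measurable]: "A \<in> sets M" using A_G G_sub unfolding subalgebra_def by auto
  have Ic_le: "Ic w \<le> indicator A w" if "w \<in> space M" for w using IoIc[OF that] Io0[OF that] by linarith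
  have Ic0: "0 \<le> Ic w" if "w \<in> space M" for w using Ic01[OF that] by auto
  define h1 where "h1 = (\<lambda>w. f w * indicator A w)"
  have h1G: "h1 \<in> borel_measurable G" unfolding h1_def using f_G A_G by measurable
  have h1M[measurable]: "h1 \<in> borel_measurable M" unfolding h1_def by measurable
  have int1: "integrable M (\<lambda>w. h1 w * W w)"
    by (rule Bochner_Integration.integrable_bound[OF intA]) (auto simp: h1_def indicator_def)
  have E1: "(\<integral>w. h1 w * W w \<partial>M) = 0"
  proof -
    have "(\<integral>w. h1 w * W w \<partial>M) = (\<integral>w. h1 w * real_cond_exp M G W w \<partial>M)"
      by (rule sigma_finite_subalgebra.real_cond_exp_intg(2)[OF cG int1 h1G W_meas, symmetric])
    also have "\<dots> = (\<integral>w. 0 \<partial>M)"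
      by (rule integral_cong_AE) (use W_ce in \<open>auto elim: AE_mp intro: AE_I2\<close>)
    finally show ?thesis by simp
  qed
  define h2 where "h2 = (\<lambda>w. Ic w * f w)"
  have h2O: "h2 \<in> borel_measurable Om" unfolding h2_def by (rule fO)
  have h2M[measurable]: "h2 \<in> borel_measurable M" unfolding h2_def by measurable
  have int2: "integrable M (\<lambda>w. h2 w * W w)"
  proof (rule Bochner_Integration.integrable_bound[OF intA])
    show "AE w in M. norm (h2 w * W w) \<le> norm (\<bar>f w * W w\<bar> * indicator A w)"
    proof (intro AE_I2)
      fix w assume w: "w \<in> space M"
      have "\<bar>h2 w * W w\<bar> = Ic w * \<bar>f w * W w\<bar>" using Ic0[OF w] by (simp add: h2_def abs_mult)
      also have "\<dots> \<le> indicator A w * \<bar>f w * W w\<bar>" by (intro mult_right_mono Ic_le w) simp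
      finally show "norm (h2 w * W w) \<le> norm (\<bar>f w * W w\<bar> * indicator A w)" by (simp add: mult.commute)
    qed
  qed simp
  define \<phi> where "\<phi> = real_cond_exp M Om W"
  have R1: "integrable M (\<lambda>w. h2 w * \<phi> w)" "(\<integral>w. h2 w * \<phi> w \<partial>M) = (\<integral>w. h2 w * W w \<partial>M)"
    unfolding \<phi>_def using sigma_finite_subalgebra.real_cond_exp_intg[OF cO int2 h2O W_meas] by auto
  have phiM[measurable]: "\<phi> \<in> borel_measurable M" unfolding \<phi>_def by simp
  have S: "AE w in M. Ic w * real_cond_exp M (sig_rv M Ic) W w = Ic w * c"
    unfolding c_def by (rule sig_rv_cexp[OF P IcM Ic01 W_int])
  have Bc: "AE w in M. Ic w * \<phi> w = Ic w * c" using B S unfolding \<phi>_def by (auto elim: AE_mp intro: AE_I2)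
  have h2phi: "AE w in M. h2 w * \<phi> w = f w * Ic w * c"
    using Bc by (rule AE_mp) (intro AE_I2, auto simp: h2_def algebra_simps)
  have int3: "integrable M (\<lambda>w. f w * Ic w * c)"
    by (rule integrable_cong_AE_imp[OF R1(1)]) (use h2phi in auto)
  have E3: "(\<integral>w. f w * Ic w * c \<partial>M) = (\<integral>w. h2 w * W w \<partial>M)"
    using integral_cong_AE[of "\<lambda>w. h2 w * \<phi> w" M "\<lambda>w. f w * Ic w * c"] h2phi R1(2) h2M phiM by simp
  have Teq: "f w * W w * Io w + f w * Ic w * c = (h1 w * W w - h2 w * W w) + f w * Ic w * c"
    if "w \<in> space M" for w
  proof -
    have e: "indicator A w = Io w + Ic w" using IoIc[OF that] by simp
    show ?thesis unfolding h1_def h2_def e by (simp add: algebra_simps)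
  qed
  have intD: "integrable M (\<lambda>w. (h1 w * W w - h2 w * W w) + f w * Ic w * c)"
    using int1 int2 int3 by auto
  show intT: "integrable M (\<lambda>w. f w * W w * Io w + f w * Ic w * c)"
  proof -
    have "integrable M (\<lambda>w. f w * W w * Io w + f w * Ic w * c) = integrable M (\<lambda>w. (h1 w * W w - h2 w * W w) + f w * Ic w * c)"
      by (rule Bochner_Integration.integrable_cong) (auto simp: Teq)
    then show ?thesis using intD by simp
  qed
  have "(\<integral>w. f w * W w * Io w + f w * Ic w * c \<partial>M) = (\<integral>w. (h1 w * W w - h2 w * W w) + f w * Ic w * c \<partial>M)"
    by (rule Bochner_Integration.integral_cong) (auto simp: Teq)
  also have "\<dots> = (\<integral>w. h1 w * W w \<partial>M) - (\<integral>w. h2 w * W w \<partial>M) + (\<integral>w. f w * Ic w * c \<partial>M)"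
    using int1 int2 int3 by (simp add: Bochner_Integration.integral_add Bochner_Integration.integral_diff)
  also have "\<dots> = 0" using E1 E3 by simp
  finally show "(\<integral>w. f w * W w * Io w + f w * Ic w * c \<partial>M) = 0" .
  define h3 where "h3 = (\<lambda>w. sgn c * \<bar>h2 w\<bar>)"
  have h3O: "h3 \<in> borel_measurable Om" unfolding h3_def using h2O by measurable
  have int4: "integrable M (\<lambda>w. h3 w * W w)"
    by (rule Bochner_Integration.integrable_bound[OF int2]) (auto simp: h3_def abs_mult sgn_if)
  have R3: "(\<integral>w. h3 w * \<phi> w \<partial>M) = (\<integral>w. h3 w * W w \<partial>M)"
    unfolding \<phi>_def using sigma_finite_subalgebra.real_cond_exp_intg[OF cO int4 h3O W_meas] by auto
  have h3phi: "AE w in M. h3 w * \<phi> w = \<bar>f w * Ic w * c\<bar>"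
  proof -
    have "h3 w * \<phi> w = \<bar>f w * Ic w * c\<bar>" if w: "w \<in> space M" and e: "Ic w * \<phi> w = Ic w * c" for w
    proof -
      have "h3 w * \<phi> w = sgn c * \<bar>f w\<bar> * (Ic w * \<phi> w)"
        using Ic0[OF w] by (simp add: h3_def h2_def abs_mult)
      also have "\<dots> = sgn c * \<bar>f w\<bar> * (Ic w * c)" using e by simp
      also have "\<dots> = \<bar>f w * Ic w * c\<bar>" using Ic0[OF w]
        by (simp add: abs_mult sgn_if)
      finally show ?thesis .
    qed
    then show ?thesis using Bc by (auto elim: AE_mp intro: AE_I2)
  qed
  have h3M[measurable]: "h3 \<in> borel_measurable M" unfolding h3_def by measurable
  have h3pM: "(\<lambda>w. h3 w * \<phi> w) \<in> borel_measurable M" by measurable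
  have E4: "(\<integral>w. \<bar>f w * Ic w * c\<bar> \<partial>M) = (\<integral>w. h3 w * W w \<partial>M)"
    using h3pM integral_cong_AE[of "\<lambda>w. h3 w * \<phi> w" M "\<lambda>w. \<bar>f w * Ic w * c\<bar>"] h3phi R3 by simp
  have "(\<integral>w. h3 w * W w \<partial>M) \<le> (\<integral>w. \<bar>h2 w * W w\<bar> \<partial>M)"
  proof (rule Bochner_Integration.integral_mono[OF int4])
    show "integrable M (\<lambda>w. \<bar>h2 w * W w\<bar>)" using int2 by simp
    fix w show "h3 w * W w \<le> \<bar>h2 w * W w\<bar>"
    proof -
      have "\<bar>h3 w * W w\<bar> = \<bar>sgn c\<bar> * \<bar>h2 w * W w\<bar>" unfolding h3_def by (simp add: abs_mult)
      also have "\<dots> \<le> \<bar>h2 w * W w\<bar>" by (cases "c = 0") (simp_all add: abs_sgn_eq)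
      finally show ?thesis by linarith
    qed
  qed
  then have E5: "(\<integral>w. \<bar>f w * Ic w * c\<bar> \<partial>M) \<le> (\<integral>w. \<bar>f w * W w\<bar> * Ic w \<partial>M)"
  proof -
    have "(\<integral>w. \<bar>h2 w * W w\<bar> \<partial>M) = (\<integral>w. \<bar>f w * W w\<bar> * Ic w \<partial>M)"
      by (rule Bochner_Integration.integral_cong) (auto simp: h2_def abs_mult Ic0)
    then show ?thesis using E4 \<open>(\<integral>w. h3 w * W w \<partial>M) \<le> _\<close> by linarith
  qed
  have Io_le: "Io w \<le> indicator A w" if "w \<in> space M" for w using IoIc[OF that] Ic0[OF that] by linarith
  have int5: "integrable M (\<lambda>w. \<bar>f w * W w\<bar> * Io w)"
  proof (rule Bochner_Integration.integrable_bound[OF intA])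
    show "AE w in M. norm (\<bar>f w * W w\<bar> * Io w) \<le> norm (\<bar>f w * W w\<bar> * indicator A w)"
    proof (intro AE_I2)
      fix w assume w: "w \<in> space M"
      have "\<bar>f w * W w\<bar> * Io w \<le> \<bar>f w * W w\<bar> * indicator A w" by (intro mult_left_mono Io_le w) simp
      then show "norm (\<bar>f w * W w\<bar> * Io w) \<le> norm (\<bar>f w * W w\<bar> * indicator A w)" using Io0[OF w] by simp
    qed
  qed simp
  have int6: "integrable M (\<lambda>w. \<bar>f w * W w\<bar> * Ic w)"
  proof (rule Bochner_Integration.integrable_bound[OF intA])
    show "AE w in M. norm (\<bar>f w * W w\<bar> * Ic w) \<le> norm (\<bar>f w * W w\<bar> * indicator A w)"
    proof (intro AE_I2)
      fix w assume w: "w \<in> space M"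
      have "\<bar>f w * W w\<bar> * Ic w \<le> \<bar>f w * W w\<bar> * indicator A w" by (intro mult_left_mono Ic_le w) simp
      then show "norm (\<bar>f w * W w\<bar> * Ic w) \<le> norm (\<bar>f w * W w\<bar> * indicator A w)" using Ic0[OF w] by simp
    qed
  qed simp
  have "(\<integral>w. \<bar>f w * W w * Io w + f w * Ic w * c\<bar> \<partial>M) \<le> (\<integral>w. \<bar>f w * W w\<bar> * Io w + \<bar>f w * Ic w * c\<bar> \<partial>M)"
  proof (rule Bochner_Integration.integral_mono)
    show "integrable M (\<lambda>w. \<bar>f w * W w * Io w + f w * Ic w * c\<bar>)" using intT by simp
    show "integrable M (\<lambda>w. \<bar>f w * W w\<bar> * Io w + \<bar>f w * Ic w * c\<bar>)" using int5 int3 by simp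
    fix w assume w: "w \<in> space M"
    have "\<bar>f w * W w * Io w\<bar> = \<bar>f w * W w\<bar> * Io w" using Io0[OF w] by (simp add: abs_mult)
    then show "\<bar>f w * W w * Io w + f w * Ic w * c\<bar> \<le> \<bar>f w * W w\<bar> * Io w + \<bar>f w * Ic w * c\<bar>"
      by (metis abs_triangle_ineq)
  qed
  also have "\<dots> = (\<integral>w. \<bar>f w * W w\<bar> * Io w \<partial>M) + (\<integral>w. \<bar>f w * Ic w * c\<bar> \<partial>M)"
    using int5 int3 by (simp add: Bochner_Integration.integral_add)
  also have "\<dots> \<le> (\<integral>w. \<bar>f w * W w\<bar> * Io w \<partial>M) + (\<integral>w. \<bar>f w * W w\<bar> * Ic w \<partial>M)"
    using E5 by simp
  also have "\<dots> = (\<integral>w. \<bar>f w * W w\<bar> * Io w + \<bar>f w * W w\<bar> * Ic w \<partial>M)"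
    using int5 int6 by (simp add: Bochner_Integration.integral_add)
  also have "\<dots> = (\<integral>w. \<bar>f w * W w\<bar> * indicator A w \<partial>M)"
    by (rule Bochner_Integration.integral_cong[OF refl]) (simp add: IoIc[symmetric] algebra_simps)
  finally show "(\<integral>w. \<bar>f w * W w * Io w + f w * Ic w * c\<bar> \<partial>M) \<le> (\<integral>w. \<bar>f w * W w\<bar> * indicator A w \<partial>M)" .
qed

lemma IoIc_ind:
  assumes mono: "strict_mono (\<lambda>j. S i j w)" and j: "1 \<le> j" and w: "w \<in> space M"
  shows "Iobs S C i j w + Icen S C i j w = indicator {w \<in> space M. S i (j - 1) w < C i w} w"
proof -
  have "S i (j - 1) w < S i j w" using mono j by (simp add: strict_mono_def)
  then show ?thesis using w unfolding Iobs_def Icen_def indicator_def by auto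
qed

lemma tau_props:
  assumes mono: "strict_mono (\<lambda>j. S i j w)" and S0: "S i 0 w = 0" and Cp: "0 < C i w"
    and ex: "\<exists>j\<ge>1. C i w \<le> S i j w" and j: "1 \<le> j"
  shows "S i (j - 1) w < C i w \<longleftrightarrow> j \<le> tau S C i w" and "1 \<le> tau S C i w"
proof -
  define t where "t = tau S C i w"
  have P: "1 \<le> t \<and> C i w \<le> S i t w" unfolding t_def tau_def using ex by (metis (mono_tags, lifting) LeastI)
  have min: "t \<le> k" if "1 \<le> k" "C i w \<le> S i k w" for k
    unfolding t_def tau_def using that by (simp add: Least_le)
  show "1 \<le> tau S C i w" using P t_def by simp
  have monoS: "mono (\<lambda>j. S i j w)" using mono by (rule strict_mono_mono)
  show "S i (j - 1) w < C i w \<longleftrightarrow> j \<le> tau S C i w"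
  proof
    assume a: "S i (j - 1) w < C i w"
    show "j \<le> tau S C i w"
    proof (rule ccontr)
      assume "\<not> j \<le> tau S C i w"
      then have "t \<le> j - 1" unfolding t_def by simp
      then have "S i t w \<le> S i (j - 1) w" using monoS by (simp add: mono_def)
      then show False using a P by simp
    qed
  next
    assume a: "j \<le> tau S C i w"
    show "S i (j - 1) w < C i w"
    proof (cases "j - 1 = 0")
      case True then show ?thesis using S0 Cp by simp
    next
      case False
      then have "\<not> C i w \<le> S i (j - 1) w" using min[of "j - 1"] a unfolding t_def by fastforce
      then show ?thesis by simp
    qed
  qed
qed

lemma per_i:
  fixes M Om :: "'w measure" and G :: "nat \<Rightarrow> 'w measure"
    and S :: "nat \<Rightarrow> nat \<Rightarrow> 'w \<Rightarrow> real" and C :: "nat \<Rightarrow> 'w \<Rightarrow> real"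
    and f W :: "nat \<Rightarrow> 'w \<Rightarrow> real"
  assumes P: "prob_space M"
    and S_meas[measurable]: "\<And>j. S i j \<in> borel_measurable M"
    and C_meas[measurable]: "C i \<in> borel_measurable M"
    and S0: "\<And>w. w \<in> space M \<Longrightarrow> S i 0 w = 0"
    and S_mono: "\<And>w. w \<in> space M \<Longrightarrow> strict_mono (\<lambda>j. S i j w)"
    and C_pos: "\<And>w. w \<in> space M \<Longrightarrow> 0 < C i w"
    and tau_fin: "AE w in M. \<exists>j\<ge>1. C i w \<le> S i j w"
    and G_sub: "\<And>j. 1 \<le> j \<Longrightarrow> subalgebra M (G j)"
    and A_G: "\<And>j. 1 \<le> j \<Longrightarrow> {w \<in> space M. S i (j - 1) w < C i w} \<in> sets (G j)"
    and f_G: "\<And>j. 1 \<le> j \<Longrightarrow> f j \<in> borel_measurable (G j)"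
    and W_meas: "\<And>j. 1 \<le> j \<Longrightarrow> W j \<in> borel_measurable M"
    and W_int: "\<And>j. 1 \<le> j \<Longrightarrow> integrable M (W j)"
    and W_ce: "\<And>j. 1 \<le> j \<Longrightarrow> AE w in M. real_cond_exp M (G j) (W j) w = 0"
    and O_sub: "subalgebra M Om"
    and IO: "\<And>j. 1 \<le> j \<Longrightarrow> Icen S C i j \<in> borel_measurable Om"
    and fO: "\<And>j. 1 \<le> j \<Longrightarrow> (\<lambda>w. Icen S C i j w * f j w) \<in> borel_measurable Om"
    and B: "\<And>j. 1 \<le> j \<Longrightarrow> AE w in M. Icen S C i j w * real_cond_exp M Om (W j) w
              = Icen S C i j w * real_cond_exp M (sig_rv M (Icen S C i j)) (W j) w"
    and bound: "(\<integral>\<^sup>+ w. (\<Squnion>j\<in>{1..}. ennreal \<bar>f j w * W j w\<bar>) * ennreal (real (tau S C i w)) \<partial>M) < \<infinity>"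
  shows "integrable M (\<lambda>w. \<Sum>j=1..tau S C i w. f j w * W j w * Iobs S C i j w
            + f j w * Icen S C i j w * ((\<integral>w'. W j w' * Icen S C i j w' \<partial>M) / (\<integral>w'. Icen S C i j w' \<partial>M)))"
    and "(\<integral>w. (\<Sum>j=1..tau S C i w. f j w * W j w * Iobs S C i j w
            + f j w * Icen S C i j w * ((\<integral>w'. W j w' * Icen S C i j w' \<partial>M) / (\<integral>w'. Icen S C i j w' \<partial>M))) \<partial>M) = 0"
proof -
  define c where "c j = (\<integral>w'. W j w' * Icen S C i j w' \<partial>M) / (\<integral>w'. Icen S C i j w' \<partial>M)" for j
  define T where "T j w = f j w * W j w * Iobs S C i j w + f j w * Icen S C i j w * c j" for j w
  define A where "A j = {w \<in> space M. S i (j - 1) w < C i w}" for j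
  define U where "U n = T (Suc n)" for n
  define sup where "sup w = (\<Squnion>j\<in>{1..}. ennreal \<bar>f j w * W j w\<bar>)" for w
  define good where "good w \<longleftrightarrow> (\<exists>j\<ge>1. C i w \<le> S i j w)" for w
  have fM[measurable]: "f j \<in> borel_measurable M" if "1 \<le> j" for j
    using measurable_from_subalg[OF G_sub f_G] that by blast
  have AM[measurable]: "A j \<in> sets M" for j unfolding A_def by measurable
  have Iobs_m[measurable]: "Iobs S C i j \<in> borel_measurable M" for j
    unfolding Iobs_def[abs_def] by measurable
  have Icen_m[measurable]: "Icen S C i j \<in> borel_measurable M" for j
    unfolding Icen_def[abs_def] by measurable
  have TM[measurable]: "T j \<in> borel_measurable M" if "1 \<le> j" for j
    unfolding T_def[abs_def] using fM[OF that] W_meas[OF that] by measurable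
  have tauM[measurable]: "tau S C i \<in> measurable M (count_space UNIV)"
    unfolding tau_def[abs_def] by measurable
  have IoIc: "Iobs S C i j w + Icen S C i j w = indicator (A j) w" if "w \<in> space M" "1 \<le> j" for w j
    unfolding A_def by (rule IoIc_ind[where S=S and i=i and w=w, OF S_mono[OF that(1)] that(2,1)])
  have inA: "w \<in> A j \<longleftrightarrow> j \<le> tau S C i w" if "w \<in> space M" "good w" "1 \<le> j" for w j
    using tau_props(1)[where S=S and C=C and i=i and w=w, OF S_mono[OF that(1)] S0[OF that(1)] C_pos[OF that(1)] _ that(3)] that
    unfolding A_def good_def by auto
  have tau1: "1 \<le> tau S C i w" if "w \<in> space M" "good w" for w
    using tau_props(2)[where S=S and C=C and i=i and w=w, OF S_mono[OF that(1)] S0[OF that(1)] C_pos[OF that(1)]] that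
    unfolding good_def by auto
  have T0: "T j w = 0" if "w \<in> space M" "good w" "tau S C i w < j" for w j
  proof -
    have j1: "1 \<le> j" using tau1[OF that(1,2)] that(3) by simp
    have "w \<notin> A j" using inA[OF that(1,2) j1] that(3) by simp
    then have "Iobs S C i j w + Icen S C i j w = 0" using IoIc[OF that(1) j1] by simp
    moreover have "0 \<le> Iobs S C i j w" "0 \<le> Icen S C i j w" unfolding Iobs_def Icen_def by auto
    ultimately have "Iobs S C i j w = 0" "Icen S C i j w = 0" by linarith+
    then show ?thesis unfolding T_def by simp
  qed
  have goodAE: "AE w in M. good w" using tau_fin unfolding good_def by simp
  define g where "g n w = ennreal (\<bar>f (Suc n) w * W (Suc n) w\<bar> * indicator (A (Suc n)) w)" for n w
  have gM[measurable]: "g n \<in> borel_measurable M" for n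
    unfolding g_def[abs_def] using fM[of "Suc n"] W_meas[of "Suc n"] by measurable
  have g_le: "g n w \<le> sup w * ennreal (real (tau S C i w))" if "w \<in> space M" "good w" for n w
  proof (cases "w \<in> A (Suc n)")
    case True
    have "g n w = ennreal \<bar>f (Suc n) w * W (Suc n) w\<bar>" using True unfolding g_def by simp
    also have "\<dots> \<le> sup w" unfolding sup_def by (rule SUP_upper) auto
    also have "\<dots> \<le> sup w * ennreal (real (tau S C i w))"
    proof -
      have "1 \<le> ennreal (real (tau S C i w))" using tau1[OF that] by simp
      then show ?thesis by (metis mult.right_neutral mult_left_mono zero_le)
    qed
    finally show ?thesis .
  next
    case False
    then show ?thesis unfolding g_def by simp
  qed
  have sum_g: "(\<Sum>n. g n w) \<le> sup w * ennreal (real (tau S C i w))" if "w \<in> space M" "good w" for w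
  proof -
    have "(\<Sum>n. g n w) = (\<Sum>n<tau S C i w. g n w)"
    proof (rule suminf_finite)
      fix n assume "n \<notin> {..<tau S C i w}"
      then have "w \<notin> A (Suc n)" using inA[OF that, of "Suc n"] by simp
      then show "g n w = 0" unfolding g_def by simp
    qed simp
    also have "\<dots> \<le> (\<Sum>n<tau S C i w. sup w)"
    proof (rule sum_mono)
      fix n assume "n \<in> {..<tau S C i w}"
      then have "Suc n \<le> tau S C i w" by simp
      have "g n w \<le> ennreal \<bar>f (Suc n) w * W (Suc n) w\<bar>" unfolding g_def
        by (intro ennreal_leI) (auto simp: indicator_def)
      also have "\<dots> \<le> sup w" unfolding sup_def by (rule SUP_upper) auto
      finally show "g n w \<le> sup w" .
    qed
    also have "\<dots> = sup w * ennreal (real (tau S C i w))"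
      by (simp add: ennreal_of_nat_eq_real_of_nat mult.commute)
    finally show ?thesis .
  qed
  have sum_g_fin: "(\<integral>\<^sup>+ w. (\<Sum>n. g n w) \<partial>M) < \<infinity>"
  proof -
    have "(\<integral>\<^sup>+ w. (\<Sum>n. g n w) \<partial>M) \<le> (\<integral>\<^sup>+ w. sup w * ennreal (real (tau S C i w)) \<partial>M)"
      by (rule nn_integral_mono_AE) (use goodAE sum_g in \<open>auto elim: AE_mp intro: AE_I2\<close>)
    also have "\<dots> < \<infinity>" using bound unfolding sup_def .
    finally show ?thesis .
  qed
  define a where "a n = (\<integral>w. \<bar>f (Suc n) w * W (Suc n) w\<bar> * indicator (A (Suc n)) w \<partial>M)" for n
  have intA: "integrable M (\<lambda>w. \<bar>f (Suc n) w * W (Suc n) w\<bar> * indicator (A (Suc n)) w)" for n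
  proof (rule integrableI_bounded)
    show "(\<lambda>w. \<bar>f (Suc n) w * W (Suc n) w\<bar> * indicator (A (Suc n)) w) \<in> borel_measurable M"
      using fM[of "Suc n"] W_meas[of "Suc n"] by measurable
    have "(\<integral>\<^sup>+ w. ennreal (norm (\<bar>f (Suc n) w * W (Suc n) w\<bar> * indicator (A (Suc n)) w)) \<partial>M)
        = (\<integral>\<^sup>+ w. g n w \<partial>M)"
      unfolding g_def by (intro nn_integral_cong) (simp add: indicator_def)
    also have "\<dots> \<le> (\<integral>\<^sup>+ w. (\<Sum>n. g n w) \<partial>M)"
    proof (intro nn_integral_mono)
      fix x
      have "g n x = (\<Sum>k\<in>{n}. g k x)" by simp
      also have "\<dots> \<le> (\<Sum>k. g k x)" by (rule sum_le_suminf) auto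
      finally show "g n x \<le> (\<Sum>k. g k x)" .
    qed
    also have "\<dots> < \<infinity>" by (rule sum_g_fin)
    finally show "(\<integral>\<^sup>+ w. ennreal (norm (\<bar>f (Suc n) w * W (Suc n) w\<bar> * indicator (A (Suc n)) w)) \<partial>M) < \<infinity>" .
  qed
  have a_summ: "summable a"
  proof (rule summable_suminf_not_top)
    show "0 \<le> a n" for n unfolding a_def by (intro integral_nonneg_AE) auto
    have "ennreal (a n) = (\<integral>\<^sup>+ w. g n w \<partial>M)" for n
      unfolding a_def g_def by (rule nn_integral_eq_integral[OF intA, symmetric]) auto
    then have "(\<Sum>n. ennreal (a n)) = (\<Sum>n. (\<integral>\<^sup>+ w. g n w \<partial>M))" by simp
    also have "\<dots> = (\<integral>\<^sup>+ w. (\<Sum>n. g n w) \<partial>M)" by (rule nn_integral_suminf[symmetric]) simp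
    finally show "(\<Sum>n. ennreal (a n)) \<noteq> top" using sum_g_fin by simp
  qed
  have TJ: "integrable M (U n) \<and> (\<integral>w. U n w \<partial>M) = 0 \<and> (\<integral>w. \<bar>U n w\<bar> \<partial>M) \<le> a n" for n
  proof -
    have j1: "1 \<le> Suc n" by simp
    have io0: "0 \<le> Iobs S C i (Suc n) w" for w unfolding Iobs_def by simp
    have ic01: "Icen S C i (Suc n) w = 0 \<or> Icen S C i (Suc n) w = 1" for w unfolding Icen_def by simp
    note r = term_j[OF P G_sub[OF j1] O_sub A_G[OF j1, folded A_def] IoIc[OF _ j1]
            io0 ic01 Iobs_m IO[OF j1] f_G[OF j1] W_meas[OF j1] W_int[OF j1] W_ce[OF j1] fO[OF j1] B[OF j1] intA[of n]]
    show ?thesis unfolding U_def T_def a_def c_def using r by simp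
  qed
  have UM[measurable]: "U n \<in> borel_measurable M" for n unfolding U_def by (rule TM) simp
  have U_summ: "summable (\<lambda>n. \<integral>w. norm (U n w) \<partial>M)"
    by (rule summable_comparison_test'[OF a_summ]) (use TJ in auto)
  have U_ae: "AE w in M. summable (\<lambda>n. norm (U n w))"
  proof -
    have "summable (\<lambda>n. norm (U n w))" if "w \<in> space M" "good w" for w
    proof (rule sums_summable[OF sums_finite[of "{..<tau S C i w}"]])
      fix n assume "n \<notin> {..<tau S C i w}"
      then show "norm (U n w) = 0" unfolding U_def using T0[OF that] by simp
    qed simp
    then show ?thesis using goodAE by (auto elim: AE_mp intro: AE_I2)
  qed
  have Uint: "integrable M (U n)" for n using TJ by simp
  have sint: "integrable M (\<lambda>w. \<Sum>n. U n w)"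
    by (rule integrable_suminf[OF Uint U_ae U_summ])
  have sval: "(\<integral>w. (\<Sum>n. U n w) \<partial>M) = 0"
    using integral_suminf[OF Uint U_ae U_summ] TJ by simp
  have eqAE: "AE w in M. (\<Sum>n. U n w) = (\<Sum>j=1..tau S C i w. T j w)"
  proof -
    have "(\<Sum>n. U n w) = (\<Sum>j=1..tau S C i w. T j w)" if "w \<in> space M" "good w" for w
    proof -
      have "(\<Sum>n. U n w) = (\<Sum>n<tau S C i w. U n w)"
        by (rule suminf_finite) (auto simp: U_def intro!: T0[OF that])
      also have "\<dots> = (\<Sum>j\<in>Suc ` {..<tau S C i w}. T j w)"
        by (simp add: sum.reindex U_def)
      also have "\<dots> = (\<Sum>j=1..tau S C i w. T j w)" by (simp add: image_Suc_lessThan)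
      finally show ?thesis .
    qed
    then show ?thesis using goodAE by (auto elim: AE_mp intro: AE_I2)
  qed
  have finM: "(\<lambda>w. \<Sum>j=1..tau S C i w. T j w) \<in> borel_measurable M"
  proof (rule measurable_compose_countable'[where g = "tau S C i" and I = UNIV, OF _ tauM])
    fix m :: nat show "(\<lambda>w. \<Sum>j=1..m. T j w) \<in> borel_measurable M"
      by (rule borel_measurable_sum) (rule TM, simp)
  qed simp
  have "integrable M (\<lambda>w. \<Sum>j=1..tau S C i w. T j w)"
    by (rule integrable_cong_AE_imp[OF sint finM eqAE])
  moreover have "(\<integral>w. (\<Sum>j=1..tau S C i w. T j w) \<partial>M) = 0"
    using integral_cong_AE[OF _ finM eqAE] sval by simp
  ultimately show "integrable M (\<lambda>w. \<Sum>j=1..tau S C i w. f j w * W j w * Iobs S C i j w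
            + f j w * Icen S C i j w * ((\<integral>w'. W j w' * Icen S C i j w' \<partial>M) / (\<integral>w'. Icen S C i j w' \<partial>M)))"
    and "(\<integral>w. (\<Sum>j=1..tau S C i w. f j w * W j w * Iobs S C i j w
            + f j w * Icen S C i j w * ((\<integral>w'. W j w' * Icen S C i j w' \<partial>M) / (\<integral>w'. Icen S C i j w' \<partial>M))) \<partial>M) = 0"
    unfolding T_def c_def by simp_all
qed

lemma deriv_seq:
  fixes \<phi> :: "'a::real_normed_vector \<Rightarrow> real"
  assumes "\<phi> differentiable (at \<theta>)"
  shows "(\<lambda>m. (\<phi> (\<theta> + (1 / real (Suc m)) *\<^sub>R b) - \<phi> \<theta>) / (1 / real (Suc m)))
           \<longlonglongrightarrow> frechet_derivative \<phi> (at \<theta>) b"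
proof -
  define D where "D = frechet_derivative \<phi> (at \<theta>)"
  have hD: "(\<phi> has_derivative D) (at \<theta>)" unfolding D_def using assms frechet_derivative_works by blast
  have lin: "linear D" using hD has_derivative_linear by blast
  have hl: "((\<lambda>s::real. \<theta> + s *\<^sub>R b) has_derivative (\<lambda>s. s *\<^sub>R b)) (at 0)"
    by (auto intro!: derivative_eq_intros)
  have hD': "(\<phi> has_derivative D) (at ((\<lambda>s::real. \<theta> + s *\<^sub>R b) 0))" using hD by simp
  have hc: "((\<lambda>s::real. \<phi> (\<theta> + s *\<^sub>R b)) has_derivative (\<lambda>s. D (s *\<^sub>R b))) (at 0)"
    using has_derivative_compose[OF hl hD'] by (simp add: comp_def)
  have e: "(\<lambda>s. D (s *\<^sub>R b)) = (*) (D b)"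
    using lin by (auto simp: linear_scale mult.commute)
  have "((\<lambda>s::real. \<phi> (\<theta> + s *\<^sub>R b)) has_field_derivative D b) (at 0)"
    using hc unfolding has_field_derivative_def e .
  then have lim: "((\<lambda>y. (\<phi> (\<theta> + y *\<^sub>R b) - \<phi> (\<theta> + 0 *\<^sub>R b)) / (y - 0)) \<longlongrightarrow> D b) (at 0)"
    unfolding has_field_derivative_iff .
  have X: "(\<lambda>m. 1 / real (Suc m)) \<longlonglongrightarrow> 0"
    using LIMSEQ_inverse_real_of_nat by (simp add: inverse_eq_divide)
  have all: "\<forall>X. (\<forall>i. X i \<in> UNIV - {0}) \<longrightarrow> X \<longlonglongrightarrow> 0 \<longrightarrow> ((\<lambda>y. (\<phi> (\<theta> + y *\<^sub>R b) - \<phi> (\<theta> + 0 *\<^sub>R b)) / (y - 0)) \<circ> X) \<longlonglongrightarrow> D b"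
    using lim unfolding tendsto_at_iff_sequentially .
  have "((\<lambda>y. (\<phi> (\<theta> + y *\<^sub>R b) - \<phi> (\<theta> + 0 *\<^sub>R b)) / (y - 0)) \<circ> (\<lambda>m. 1 / real (Suc m))) \<longlonglongrightarrow> D b"
    by (rule all[rule_format, OF _ X]) simp
  then show ?thesis unfolding D_def comp_def by simp
qed

lemma F_gen_sub:
  fixes S :: "nat \<Rightarrow> nat \<Rightarrow> 'w \<Rightarrow> real" and C :: "nat \<Rightarrow> 'w \<Rightarrow> real" and x :: "nat \<Rightarrow> nat \<Rightarrow> 'w \<Rightarrow> 'c"
  assumes "\<And>l. S i l \<in> borel_measurable M" "\<And>l. x i l \<in> measurable M N"
  shows "(\<Union>l\<in>{0..j}. rv_events M (S i l) borel) \<union> (\<Union>l\<in>{1..j+1}. rv_events M (x i l) N) \<subseteq> sets M"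
proof -
  have "rv_events M (S i l) borel \<subseteq> sets M" for l by (rule rv_events_sub[OF assms(1)])
  moreover have "rv_events M (x i l) N \<subseteq> sets M" for l by (rule rv_events_sub[OF assms(2)])
  ultimately show ?thesis by blast
qed

lemma G_gen_sub:
  fixes S :: "nat \<Rightarrow> nat \<Rightarrow> 'w \<Rightarrow> real" and C :: "nat \<Rightarrow> 'w \<Rightarrow> real" and x :: "nat \<Rightarrow> nat \<Rightarrow> 'w \<Rightarrow> 'c"
  assumes [measurable]: "\<And>l. S i l \<in> borel_measurable M" "\<And>l. x i l \<in> measurable M N" "C i \<in> borel_measurable M"
  shows "(\<Union>l\<in>{0..j}. rv_events M (S i l) borel) \<union> (\<Union>l\<in>{1..j+1}. rv_events M (x i l) N)
      \<union> (\<Union>k\<in>{1..j}. {{\<omega>\<in>space M. S i k \<omega> \<le> C i \<omega>}, {\<omega>\<in>space M. S i k \<omega> = C i \<omega>}}) \<subseteq> sets M"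
proof -
  have "{\<omega>\<in>space M. S i k \<omega> \<le> C i \<omega>} \<in> sets M" "{\<omega>\<in>space M. S i k \<omega> = C i \<omega>} \<in> sets M" for k
  proof -
    have [measurable]: "S i k \<in> borel_measurable M" "C i \<in> borel_measurable M" using assms by auto
    show "{\<omega>\<in>space M. S i k \<omega> \<le> C i \<omega>} \<in> sets M" "{\<omega>\<in>space M. S i k \<omega> = C i \<omega>} \<in> sets M"
      by measurable
  qed
  then show ?thesis using F_gen_sub[where S=S and x=x and i=i, OF assms(1,2), of j] by blast
qed

lemma G_subalg:
  fixes S :: "nat \<Rightarrow> nat \<Rightarrow> 'w \<Rightarrow> real" and C :: "nat \<Rightarrow> 'w \<Rightarrow> real" and x :: "nat \<Rightarrow> nat \<Rightarrow> 'w \<Rightarrow> 'c"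
  assumes [measurable]: "\<And>l. S i l \<in> borel_measurable M" "\<And>l. x i l \<in> measurable M N" "C i \<in> borel_measurable M"
  shows "subalgebra M (G_alg M N S x C i j)"
  unfolding G_alg_def by (rule sigma_subalg[OF G_gen_sub[where S=S and x=x and C=C and i=i, OF assms]])

lemma F_subalg:
  fixes S :: "nat \<Rightarrow> nat \<Rightarrow> 'w \<Rightarrow> real" and C :: "nat \<Rightarrow> 'w \<Rightarrow> real" and x :: "nat \<Rightarrow> nat \<Rightarrow> 'w \<Rightarrow> 'c"
  assumes "\<And>l. S i l \<in> borel_measurable M" "\<And>l. x i l \<in> measurable M N"
  shows "subalgebra M (F_alg M N S x i j)"
  unfolding F_alg_def by (rule sigma_subalg[OF F_gen_sub[where S=S and x=x and i=i, OF assms]])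

lemma FG_subalg:
  fixes S :: "nat \<Rightarrow> nat \<Rightarrow> 'w \<Rightarrow> real" and C :: "nat \<Rightarrow> 'w \<Rightarrow> real" and x :: "nat \<Rightarrow> nat \<Rightarrow> 'w \<Rightarrow> 'c"
  assumes [measurable]: "\<And>l. S i l \<in> borel_measurable M" "\<And>l. x i l \<in> measurable M N" "C i \<in> borel_measurable M"
  shows "subalgebra (G_alg M N S x C i j) (F_alg M N S x i j)"
  unfolding G_alg_def F_alg_def
  by (rule sigma_sets_mono_sub) (use G_gen_sub[where S=S and x=x and C=C and i=i, OF assms, of j] sets.sets_into_space in blast)+

lemma A_G_alg:
  fixes S :: "nat \<Rightarrow> nat \<Rightarrow> 'w \<Rightarrow> real" and C :: "nat \<Rightarrow> 'w \<Rightarrow> real" and x :: "nat \<Rightarrow> nat \<Rightarrow> 'w \<Rightarrow> 'c"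
  assumes [measurable]: "\<And>l. S i l \<in> borel_measurable M" "\<And>l. x i l \<in> measurable M N" "C i \<in> borel_measurable M"
    and S0: "\<And>w. w \<in> space M \<Longrightarrow> S i 0 w = 0" and Cp: "\<And>w. w \<in> space M \<Longrightarrow> 0 < C i w"
  shows "{w \<in> space M. S i k w < C i w} \<in> sets (G_alg M N S x C i k)"
proof (cases "k = 0")
  case True
  then have "{w \<in> space M. S i k w < C i w} = space (G_alg M N S x C i k)"
    using S0 Cp by (auto simp: G_alg_def space_measure_of_conv)
  then show ?thesis by simp
next
  case False
  let ?Gs = "(\<Union>l\<in>{0..k}. rv_events M (S i l) borel) \<union> (\<Union>l\<in>{1..k+1}. rv_events M (x i l) N)
      \<union> (\<Union>k'\<in>{1..k}. {{\<omega>\<in>space M. S i k' \<omega> \<le> C i \<omega>}, {\<omega>\<in>space M. S i k' \<omega> = C i \<omega>}})"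
  have pw: "?Gs \<subseteq> Pow (space M)" using G_gen_sub[where S=S and x=x and C=C and i=i, OF assms(1-3), of k] sets.sets_into_space by blast
  have k1: "k \<in> {1..k}" using False by simp
  have a: "{\<omega>\<in>space M. S i k \<omega> \<le> C i \<omega>} \<in> sets (G_alg M N S x C i k)"
    unfolding G_alg_def by (rule set_in_sigma[OF _ pw]) (use k1 in blast)
  have b: "{\<omega>\<in>space M. S i k \<omega> = C i \<omega>} \<in> sets (G_alg M N S x C i k)"
    unfolding G_alg_def by (rule set_in_sigma[OF _ pw]) (use k1 in blast)
  have "{w \<in> space M. S i k w < C i w} = {\<omega>\<in>space M. S i k \<omega> \<le> C i \<omega>} - {\<omega>\<in>space M. S i k \<omega> = C i \<omega>}"
    by auto
  then show ?thesis using a b by auto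
qed

lemma fgrad_comp_meas:
  fixes mu V :: "nat \<Rightarrow> nat \<Rightarrow> real^'p \<Rightarrow> 'w \<Rightarrow> real" and Fm :: "'w measure"
  assumes sp: "space Fm = space M"
    and mu_m: "\<And>t. mu i j t \<in> borel_measurable Fm"
    and V_m: "V i j \<theta> \<in> borel_measurable Fm"
    and diff: "\<And>w. w \<in> space M \<Longrightarrow> (\<lambda>t. mu i j t w) differentiable (at \<theta>)"
    and b: "b \<in> Basis"
  shows "(\<lambda>w. fgrad mu V \<theta> i j w \<bullet> b) \<in> borel_measurable Fm"
proof -
  obtain k where k: "b = axis k 1" using b by (auto simp: Basis_vec_def)
  have e: "fgrad mu V \<theta> i j w \<bullet> b = (1 / V i j \<theta> w) * frechet_derivative (\<lambda>t. mu i j t w) (at \<theta>) b" for w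
    unfolding k fgrad_def cart_eq_inner_axis[symmetric] by simp
  have "(\<lambda>w. frechet_derivative (\<lambda>t. mu i j t w) (at \<theta>) b) \<in> borel_measurable Fm"
  proof (rule borel_measurable_LIMSEQ_real)
    fix w assume "w \<in> space Fm"
    then show "(\<lambda>m. (mu i j (\<theta> + (1 / real (Suc m)) *\<^sub>R b) w - mu i j \<theta> w) / (1 / real (Suc m)))
           \<longlonglongrightarrow> frechet_derivative (\<lambda>t. mu i j t w) (at \<theta>) b"
      using deriv_seq[OF diff, of w b] sp by simp
  next
    fix m
    show "(\<lambda>w. (mu i j (\<theta> + (1 / real (Suc m)) *\<^sub>R b) w - mu i j \<theta> w) / (1 / real (Suc m))) \<in> borel_measurable Fm"
      using mu_m by measurable
  qed
  then show ?thesis unfolding e using V_m by measurable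
qed

lemma sq_int_imp_int:
  fixes Y :: "'w \<Rightarrow> real"
  assumes P: "prob_space M" and Ym: "Y \<in> borel_measurable M" and Ysq: "integrable M (\<lambda>w. (Y w)\<^sup>2)"
  shows "integrable M Y"
proof -
  interpret prob_space M by fact
  have "integrable M (\<lambda>w. 1 + (Y w)\<^sup>2)" using Ysq by simp
  moreover have "\<bar>Y w\<bar> \<le> 1 + (Y w)\<^sup>2" for w
  proof (cases "\<bar>Y w\<bar> \<le> 1")
    case True then show ?thesis by (smt (verit) zero_le_power2)
  next
    case False
    then have "\<bar>Y w\<bar> * 1 \<le> \<bar>Y w\<bar> * \<bar>Y w\<bar>" by (intro mult_left_mono) auto
    then show ?thesis by (simp add: power2_eq_square abs_mult_self_eq)
  qed
  then have "AE w in M. norm (Y w) \<le> norm (1 + (Y w)\<^sup>2)" by (intro AE_I2) simp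
  ultimately show ?thesis
    using Bochner_Integration.integrable_bound[of M "\<lambda>w. 1 + (Y w)\<^sup>2" Y] Ym by blast
qed

lemma Zce:
  fixes M G :: "'w measure" and Y mu V :: "'w \<Rightarrow> real"
  assumes P: "prob_space M" and G_sub: "subalgebra M G"
    and Ym[measurable]: "Y \<in> borel_measurable M" and Ysq: "integrable M (\<lambda>w. (Y w)\<^sup>2)"
    and muG: "mu \<in> borel_measurable G" and VG: "V \<in> borel_measurable G"
    and Vpos: "\<And>w. w \<in> space M \<Longrightarrow> 0 < V w"
    and mean: "AE w in M. real_cond_exp M G Y w = mu w"
  shows "integrable M mu" "AE w in M. real_cond_exp M G (\<lambda>w. (Y w - mu w) / V w) w = 0"
proof -
  interpret sigma_finite_subalgebra M G by (rule pspace_sfs[OF P G_sub])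
  have VposAE: "AE w in M. 0 < V w" by (intro AE_I2 Vpos)
  have muM[measurable]: "mu \<in> borel_measurable M" by (rule measurable_from_subalg[OF G_sub muG])
  have VM[measurable]: "V \<in> borel_measurable M" by (rule measurable_from_subalg[OF G_sub VG])
  have Yint: "integrable M Y" by (rule sq_int_imp_int[OF P Ym Ysq])
  show mu_int: "integrable M mu"
    by (rule integrable_cong_AE_imp[OF real_cond_exp_int(1)[OF Yint] muM mean])
  define Z where "Z = (\<lambda>w. (Y w - mu w) / V w)"
  have Zm[measurable]: "Z \<in> borel_measurable M" unfolding Z_def by measurable
  have VZ: "V w * Z w = Y w - mu w" if "w \<in> space M" for w
    using Vpos[OF that] unfolding Z_def by simp
  have int_VZ: "integrable M (\<lambda>w. V w * Z w)"
  proof -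
    have "integrable M (\<lambda>w. Y w - mu w)" using Yint mu_int by simp
    moreover have "integrable M (\<lambda>w. V w * Z w) = integrable M (\<lambda>w. Y w - mu w)"
      by (rule Bochner_Integration.integrable_cong) (auto simp: VZ)
    ultimately show ?thesis by simp
  qed
  have m1: "AE w in M. real_cond_exp M G (\<lambda>w. V w * Z w) w = V w * real_cond_exp M G Z w"
    by (rule real_cond_exp_mult[OF VG Zm int_VZ])
  have m2: "AE w in M. real_cond_exp M G (\<lambda>w. V w * Z w) w = real_cond_exp M G (\<lambda>w. Y w - mu w) w"
    by (rule real_cond_exp_cong) (auto intro!: AE_I2 simp: VZ)
  have m3: "AE w in M. real_cond_exp M G (\<lambda>w. Y w - mu w) w = real_cond_exp M G Y w - real_cond_exp M G mu w"
    by (rule real_cond_exp_diff[OF Yint mu_int])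
  have m4: "AE w in M. real_cond_exp M G mu w = mu w"
    by (rule real_cond_exp_F_meas[OF mu_int muG])
  have "AE w in M. V w * real_cond_exp M G Z w = 0"
    using m1 m2 m3 m4 mean by eventually_elim auto
  then show "AE w in M. real_cond_exp M G (\<lambda>w. (Y w - mu w) / V w) w = 0"
    unfolding Z_def[symmetric] using VposAE by eventually_elim auto
qed

lemma Z2ce:
  fixes M G :: "'w measure" and Y mu V :: "'w \<Rightarrow> real"
  assumes P: "prob_space M" and G_sub: "subalgebra M G"
    and Ym[measurable]: "Y \<in> borel_measurable M" and Ysq: "integrable M (\<lambda>w. (Y w)\<^sup>2)"
    and muG: "mu \<in> borel_measurable G" and VG: "V \<in> borel_measurable G"
    and Vpos: "\<And>w. w \<in> space M \<Longrightarrow> 0 < V w"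
    and mean: "AE w in M. real_cond_exp M G Y w = mu w"
    and var: "AE w in M. real_cond_exp M G (\<lambda>w. (Y w - mu w)\<^sup>2) w = \<sigma>2 * (V w)\<^sup>2"
    and Zsq: "integrable M (\<lambda>w. ((Y w - mu w) / V w)\<^sup>2)"
  shows "AE w in M. real_cond_exp M G (\<lambda>w. ((Y w - mu w) / V w)\<^sup>2 - \<sigma>2) w = 0"
proof -
  interpret sigma_finite_subalgebra M G by (rule pspace_sfs[OF P G_sub])
  interpret prob_space M by fact
  have VposAE: "AE w in M. 0 < V w" by (intro AE_I2 Vpos)
  have muM[measurable]: "mu \<in> borel_measurable M" by (rule measurable_from_subalg[OF G_sub muG])
  have VM[measurable]: "V \<in> borel_measurable M" by (rule measurable_from_subalg[OF G_sub VG])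
  have Yint: "integrable M Y" by (rule sq_int_imp_int[OF P Ym Ysq])
  have mu2: "integrable M (\<lambda>w. (mu w)\<^sup>2)"
  proof -
    have "integrable M (\<lambda>w. (real_cond_exp M G Y w)\<^sup>2)"
      by (rule integrable_convex_cond_exp[where I = UNIV and q = "\<lambda>x. x\<^sup>2"])
         (auto simp: Yint Ysq convex_power2)
    moreover have "(\<lambda>w. (mu w)\<^sup>2) \<in> borel_measurable M" by measurable
    moreover have "AE w in M. (real_cond_exp M G Y w)\<^sup>2 = (mu w)\<^sup>2" using mean by eventually_elim simp
    ultimately show ?thesis by (rule integrable_cong_AE_imp)
  qed
  have YM2: "integrable M (\<lambda>w. (Y w - mu w)\<^sup>2)"
  proof (rule Bochner_Integration.integrable_bound[of M "\<lambda>w. 2 * (Y w)\<^sup>2 + 2 * (mu w)\<^sup>2"])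
    show "integrable M (\<lambda>w. 2 * (Y w)\<^sup>2 + 2 * (mu w)\<^sup>2)" using Ysq mu2 by simp
    show "AE w in M. norm ((Y w - mu w)\<^sup>2) \<le> norm (2 * (Y w)\<^sup>2 + 2 * (mu w)\<^sup>2)"
    proof (intro AE_I2)
      fix w
      have "0 \<le> (Y w + mu w)\<^sup>2" by simp
      then have "(Y w - mu w)\<^sup>2 \<le> 2 * (Y w)\<^sup>2 + 2 * (mu w)\<^sup>2" by (simp add: power2_eq_square algebra_simps)
      then show "norm ((Y w - mu w)\<^sup>2) \<le> norm (2 * (Y w)\<^sup>2 + 2 * (mu w)\<^sup>2)" by simp
    qed
  qed simp
  define Z2 where "Z2 = (\<lambda>w. ((Y w - mu w) / V w)\<^sup>2)"
  have Zm[measurable]: "Z2 \<in> borel_measurable M" unfolding Z2_def by measurable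
  have V2G: "(\<lambda>w. (V w)\<^sup>2) \<in> borel_measurable G" using VG by measurable
  have VZ: "(V w)\<^sup>2 * Z2 w = (Y w - mu w)\<^sup>2" if "w \<in> space M" for w
    using Vpos[OF that] unfolding Z2_def by (simp add: power_divide)
  have int_VZ: "integrable M (\<lambda>w. (V w)\<^sup>2 * Z2 w)"
  proof -
    have "integrable M (\<lambda>w. (V w)\<^sup>2 * Z2 w) = integrable M (\<lambda>w. (Y w - mu w)\<^sup>2)"
      by (rule Bochner_Integration.integrable_cong) (auto simp: VZ)
    then show ?thesis using YM2 by simp
  qed
  have m1: "AE w in M. real_cond_exp M G (\<lambda>w. (V w)\<^sup>2 * Z2 w) w = (V w)\<^sup>2 * real_cond_exp M G Z2 w"
    by (rule real_cond_exp_mult[OF V2G Zm int_VZ])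
  have m2: "AE w in M. real_cond_exp M G (\<lambda>w. (V w)\<^sup>2 * Z2 w) w = real_cond_exp M G (\<lambda>w. (Y w - mu w)\<^sup>2) w"
    by (rule real_cond_exp_cong) (auto intro!: AE_I2 simp: VZ)
  have e1: "AE w in M. real_cond_exp M G Z2 w = \<sigma>2"
  proof -
    have "AE w in M. (V w)\<^sup>2 * real_cond_exp M G Z2 w = \<sigma>2 * (V w)\<^sup>2"
      using m1 m2 var by eventually_elim auto
    then show ?thesis using VposAE by eventually_elim auto
  qed
  have Z2int: "integrable M Z2" using Zsq unfolding Z2_def .
  have m3: "AE w in M. real_cond_exp M G (\<lambda>w. Z2 w - \<sigma>2) w = real_cond_exp M G Z2 w - real_cond_exp M G (\<lambda>w. \<sigma>2) w"
    by (rule real_cond_exp_diff[OF Z2int]) simp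
  have m4: "AE w in M. real_cond_exp M G (\<lambda>w. \<sigma>2) w = \<sigma>2"
    by (rule real_cond_exp_F_meas) simp_all
  have fe: "(\<lambda>w. ((Y w - mu w) / V w)\<^sup>2 - \<sigma>2) = (\<lambda>w. Z2 w - \<sigma>2)" by (simp add: Z2_def)
  have "AE w in M. real_cond_exp M G (\<lambda>w. Z2 w - \<sigma>2) w = 0"
    using m3 m4 e1 by eventually_elim simp
  then show ?thesis unfolding fe .
qed

theorem proposition2p2:
  fixes M :: "'w measure" and N :: "'c measure"
    and K :: "((real^'p::finite) \<times> real) set"
    and \<theta> :: "real^'p" and \<sigma>2 :: real
    and S :: "nat \<Rightarrow> nat \<Rightarrow> 'w \<Rightarrow> real" and x :: "nat \<Rightarrow> nat \<Rightarrow> 'w \<Rightarrow> 'c"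
    and C :: "nat \<Rightarrow> 'w \<Rightarrow> real"
    and mu V :: "nat \<Rightarrow> nat \<Rightarrow> real^'p \<Rightarrow> 'w \<Rightarrow> real"
    and b :: "nat \<Rightarrow> nat \<Rightarrow> 'w \<Rightarrow> real"
  assumes P: "prob_space M"
    and K: "compact K" "(\<theta>, \<sigma>2) \<in> K"
    \<comment> \<open>event times, censoring times, covariates\<close>
    and S_meas: "\<And>i j. S i j \<in> borel_measurable M"
    and x_meas: "\<And>i j. x i j \<in> measurable M N"
    and C_meas: "\<And>i. C i \<in> borel_measurable M"
    and S0: "\<And>i \<omega>. \<omega> \<in> space M \<Longrightarrow> S i 0 \<omega> = 0"
    and S_mono: "\<And>i \<omega>. \<omega> \<in> space M \<Longrightarrow> strict_mono (\<lambda>j. S i j \<omega>)"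
    and C_pos: "\<And>i \<omega>. \<omega> \<in> space M \<Longrightarrow> 0 < C i \<omega>"
    \<comment> \<open>the data vectors (S_ij, x_ij, C_i; j >= 1) are i.i.d. over i\<close>
    and indep: "prob_space.indep_vars M
          (\<lambda>_. (\<Pi>\<^sub>M j\<in>{1::nat..}. borel \<Otimes>\<^sub>M N) \<Otimes>\<^sub>M borel)
          (\<lambda>i \<omega>. (\<lambda>j\<in>{1..}. (S i j \<omega>, x i j \<omega>), C i \<omega>)) {1..}"
    and ident: "\<And>i. 1 \<le> i \<Longrightarrow>
          distr M ((\<Pi>\<^sub>M j\<in>{1::nat..}. borel \<Otimes>\<^sub>M N) \<Otimes>\<^sub>M borel)
            (\<lambda>\<omega>. (\<lambda>j\<in>{1..}. (S i j \<omega>, x i j \<omega>), C i \<omega>))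
        = distr M ((\<Pi>\<^sub>M j\<in>{1::nat..}. borel \<Otimes>\<^sub>M N) \<Otimes>\<^sub>M borel)
            (\<lambda>\<omega>. (\<lambda>j\<in>{1..}. (S 1 j \<omega>, x 1 j \<omega>), C 1 \<omega>))"
    \<comment> \<open>finite second moments of the gap times\<close>
    and Y_sq: "\<And>i j. 1 \<le> j \<Longrightarrow> integrable M (\<lambda>\<omega>. (gap S i j \<omega>)\<^sup>2)"
    \<comment> \<open>mu_ij, V_ij: F_{i,j-1}-measurable for every parameter value, V > 0, differentiable in theta\<close>
    and mu_meas: "\<And>i j t. 1 \<le> j \<Longrightarrow> mu i j t \<in> borel_measurable (F_alg M N S x i (j - 1))"
    and V_meas: "\<And>i j t. 1 \<le> j \<Longrightarrow> V i j t \<in> borel_measurable (F_alg M N S x i (j - 1))"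
    and V_pos: "\<And>i j t \<omega>. 1 \<le> j \<Longrightarrow> \<omega> \<in> space M \<Longrightarrow> 0 < V i j t \<omega>"
    and mu_diff: "\<And>i j \<omega>. 1 \<le> j \<Longrightarrow> \<omega> \<in> space M \<Longrightarrow> (\<lambda>t. mu i j t \<omega>) differentiable (at \<theta>)"
    \<comment> \<open>conditional moment identities given F_{i,j-1}\<close>
    and mean_F: "\<And>i j. 1 \<le> j \<Longrightarrow>
          AE \<omega> in M. real_cond_exp M (F_alg M N S x i (j - 1)) (gap S i j) \<omega> = mu i j \<theta> \<omega>"
    and var_F: "\<And>i j. 1 \<le> j \<Longrightarrow>
          AE \<omega> in M. real_cond_exp M (F_alg M N S x i (j - 1))
                        (\<lambda>\<omega>. (gap S i j \<omega> - mu i j \<theta> \<omega>)\<^sup>2) \<omega> = \<sigma>2 * (V i j \<theta> \<omega>)\<^sup>2"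
    \<comment> \<open>assumption (A): the same identities given G_{i,j-1}\<close>
    and mean_G: "\<And>i j. 1 \<le> j \<Longrightarrow>
          AE \<omega> in M. real_cond_exp M (G_alg M N S x C i (j - 1)) (gap S i j) \<omega> = mu i j \<theta> \<omega>"
    and var_G: "\<And>i j. 1 \<le> j \<Longrightarrow>
          AE \<omega> in M. real_cond_exp M (G_alg M N S x C i (j - 1))
                        (\<lambda>\<omega>. (gap S i j \<omega> - mu i j \<theta> \<omega>)\<^sup>2) \<omega> = \<sigma>2 * (V i j \<theta> \<omega>)\<^sup>2"
    and Z_sq: "\<And>i j. 1 \<le> j \<Longrightarrow> integrable M (\<lambda>\<omega>. (Zres S mu V \<theta> i j \<omega>)\<^sup>2)"
    and b_meas: "\<And>i j. 1 \<le> j \<Longrightarrow> b i j \<in> borel_measurable (F_alg M N S x i (j - 1))"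
    \<comment> \<open>tau_i finite a.s.\<close>
    and tau_fin: "\<And>i. AE \<omega> in M. \<exists>j\<ge>1. C i \<omega> \<le> S i j \<omega>"
    \<comment> \<open>g_i(theta) tau_i and h_i(eta) tau_i integrable\<close>
    and g_int: "\<And>i. 1 \<le> i \<Longrightarrow>
          (\<integral>\<^sup>+ \<omega>. (\<Squnion>j\<in>{1..}. ennreal (norm (Zres S mu V \<theta> i j \<omega> *\<^sub>R fgrad mu V \<theta> i j \<omega>)))
                   * ennreal (real (tau S C i \<omega>)) \<partial>M) < \<infinity>"
    and h_int: "\<And>i. 1 \<le> i \<Longrightarrow>
          (\<integral>\<^sup>+ \<omega>. (\<Squnion>j\<in>{1..}. ennreal \<bar>b i j \<omega> * ((Zres S mu V \<theta> i j \<omega>)\<^sup>2 - \<sigma>2)\<bar>)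
                   * ennreal (real (tau S C i \<omega>)) \<partial>M) < \<infinity>"
    \<comment> \<open>conditions (B_f(theta)) and (B_b(eta))\<close>
    and B_f: "\<And>i j. 1 \<le> i \<Longrightarrow> 1 \<le> j \<Longrightarrow>
          AE \<omega> in M. Icen S C i j \<omega> * real_cond_exp M (O_alg M (fgrad mu V \<theta>) (Icen S C) i)
                                         (Zres S mu V \<theta> i j) \<omega>
                    = Icen S C i j \<omega> * real_cond_exp M (sig_rv M (Icen S C i j)) (Zres S mu V \<theta> i j) \<omega>"
    and B_b: "\<And>i j. 1 \<le> i \<Longrightarrow> 1 \<le> j \<Longrightarrow>
          AE \<omega> in M. Icen S C i j \<omega> * real_cond_exp M (O_alg M b (Icen S C) i)
                                         (\<lambda>\<omega>. (Zres S mu V \<theta> i j \<omega>)\<^sup>2 - \<sigma>2) \<omega>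
                    = Icen S C i j \<omega> * real_cond_exp M (sig_rv M (Icen S C i j))
                                         (\<lambda>\<omega>. (Zres S mu V \<theta> i j \<omega>)\<^sup>2 - \<sigma>2) \<omega>"
  shows "\<forall>n\<ge>1. integrable M (gobs1 M S C mu V \<theta> n) \<and> (\<integral>\<omega>. gobs1 M S C mu V \<theta> n \<omega> \<partial>M) = 0
           \<and> integrable M (gobs2 M S C mu V b \<theta> \<sigma>2 n) \<and> (\<integral>\<omega>. gobs2 M S C mu V b \<theta> \<sigma>2 n \<omega> \<partial>M) = 0"
proof -
  interpret prob_space M by (rule P)
  note [measurable] = S_meas x_meas C_meas
  have Gsub: "subalgebra M (G_alg M N S x C i k)" for i k
    by (rule G_subalg[where S=S and x=x and C=C and i=i, OF S_meas x_meas C_meas])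
  have FGsub: "subalgebra (G_alg M N S x C i k) (F_alg M N S x i k)" for i k
    by (rule FG_subalg[where S=S and x=x and C=C and i=i, OF S_meas x_meas C_meas])
  have AG: "{w \<in> space M. S i k w < C i w} \<in> sets (G_alg M N S x C i k)" for i k
    by (rule A_G_alg[where S=S and x=x and C=C and i=i, OF S_meas x_meas C_meas S0 C_pos])
  have spF: "space (F_alg M N S x i k) = space M" for i k
    unfolding F_alg_def by (simp add: space_measure_of_conv)
  have fgG: "(\<lambda>w. fgrad mu V \<theta> i j w \<bullet> bb) \<in> borel_measurable (G_alg M N S x C i (j - 1))"
    if "1 \<le> j" "bb \<in> Basis" for i j bb
    by (rule measurable_from_subalg[OF FGsub fgrad_comp_meas[where mu=mu and V=V and i=i and j=j and \<theta>=\<theta>, OF spF mu_meas[OF that(1)] V_meas[OF that(1)] mu_diff[OF that(1)] that(2)]])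
  have fgM[measurable]: "fgrad mu V \<theta> i j \<in> borel_measurable M" if "1 \<le> j" for i j
    unfolding borel_measurable_euclidean_space[where f = "fgrad mu V \<theta> i j"]
    using measurable_from_subalg[OF Gsub fgG[OF that]] by blast
  have bG: "b i j \<in> borel_measurable (G_alg M N S x C i (j - 1))" if "1 \<le> j" for i j
    by (rule measurable_from_subalg[OF FGsub b_meas[OF that]])
  have muG: "mu i j \<theta> \<in> borel_measurable (G_alg M N S x C i (j - 1))" if "1 \<le> j" for i j
    by (rule measurable_from_subalg[OF FGsub mu_meas[OF that]])
  have VG: "V i j \<theta> \<in> borel_measurable (G_alg M N S x C i (j - 1))" if "1 \<le> j" for i j
    by (rule measurable_from_subalg[OF FGsub V_meas[OF that]])
  have bM[measurable]: "b i j \<in> borel_measurable M" if "1 \<le> j" for i j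
    by (rule measurable_from_subalg[OF Gsub bG[OF that]])
  have muM[measurable]: "mu i j \<theta> \<in> borel_measurable M" if "1 \<le> j" for i j
    by (rule measurable_from_subalg[OF Gsub muG[OF that]])
  have VM[measurable]: "V i j \<theta> \<in> borel_measurable M" if "1 \<le> j" for i j
    by (rule measurable_from_subalg[OF Gsub VG[OF that]])
  have gapM[measurable]: "gap S i j \<in> borel_measurable M" for i j
    unfolding gap_def[abs_def] by measurable
  have ZW: "Zres S mu V \<theta> i j = (\<lambda>w. (gap S i j w - mu i j \<theta> w) / V i j \<theta> w)" for i j
    by (rule ext) (simp add: Zres_def)
  have ZM[measurable]: "Zres S mu V \<theta> i j \<in> borel_measurable M" if "1 \<le> j" for i j
    unfolding ZW using that by measurable
  have Zint: "integrable M (Zres S mu V \<theta> i j)" if "1 \<le> j" for i j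
    by (rule sq_int_imp_int[OF P ZM[OF that] Z_sq[OF that]])
  have Z2int: "integrable M (\<lambda>w. (Zres S mu V \<theta> i j w)\<^sup>2 - \<sigma>2)" if "1 \<le> j" for i j
    using Z_sq[OF that] by simp
  have Zce': "AE w in M. real_cond_exp M (G_alg M N S x C i (j - 1)) (Zres S mu V \<theta> i j) w = 0"
    if "1 \<le> j" for i j
    unfolding ZW by (rule Zce(2)[OF P Gsub gapM Y_sq[OF that] muG[OF that] VG[OF that] V_pos[OF that] mean_G[OF that]])
  have Z2ce': "AE w in M. real_cond_exp M (G_alg M N S x C i (j - 1)) (\<lambda>w. (Zres S mu V \<theta> i j w)\<^sup>2 - \<sigma>2) w = 0"
    if "1 \<le> j" for i j
    using Z2ce[OF P Gsub gapM Y_sq[OF that] muG[OF that] VG[OF that] V_pos[OF that] mean_G[OF that] var_G[OF that]]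
      Z_sq[OF that] unfolding ZW by simp
  have IcM[measurable]: "Icen S C i j \<in> borel_measurable M" for i j
    unfolding Icen_def[abs_def] by measurable
  have O1sub: "subalgebra M (O_alg M (fgrad mu V \<theta>) (Icen S C) i)" for i
    unfolding O_alg_def
  proof (rule sigma_subalg)
    have "rv_events M (\<lambda>\<omega>. Icen S C i j \<omega> *\<^sub>R fgrad mu V \<theta> i j \<omega>) borel \<subseteq> sets M" if "j \<in> {1..}" for j
    proof -
      have [measurable]: "fgrad mu V \<theta> i j \<in> borel_measurable M" using fgM that by simp
      show ?thesis by (rule rv_events_sub) measurable
    qed
    moreover have "rv_events M (Icen S C i j) borel \<subseteq> sets M" for j
      by (rule rv_events_sub) measurable
    ultimately show "(\<Union>j\<in>{1..}. rv_events M (\<lambda>\<omega>. Icen S C i j \<omega> *\<^sub>R fgrad mu V \<theta> i j \<omega>) borel \<union> rv_events M (Icen S C i j) borel) \<subseteq> sets M"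
      by blast
  qed
  have O1pow: "(\<Union>j\<in>{1..}. rv_events M (\<lambda>\<omega>. Icen S C i j \<omega> *\<^sub>R fgrad mu V \<theta> i j \<omega>) borel \<union> rv_events M (Icen S C i j) borel) \<subseteq> Pow (space M)" for i
    by (simp add: UN_subset_iff rv_events_pow)
  have IO1: "Icen S C i j \<in> borel_measurable (O_alg M (fgrad mu V \<theta>) (Icen S C) i)" if "1 \<le> j" for i j
    unfolding O_alg_def by (rule rv_meas_sigma[OF _ O1pow]) (use that in auto)
  have vO1: "(\<lambda>\<omega>. Icen S C i j \<omega> *\<^sub>R fgrad mu V \<theta> i j \<omega>) \<in> borel_measurable (O_alg M (fgrad mu V \<theta>) (Icen S C) i)" if "1 \<le> j" for i j
    unfolding O_alg_def by (rule rv_meas_sigma[OF _ O1pow]) (use that in auto)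
  have fO1: "(\<lambda>w. Icen S C i j w * (fgrad mu V \<theta> i j w \<bullet> bb)) \<in> borel_measurable (O_alg M (fgrad mu V \<theta>) (Icen S C) i)"
    if "1 \<le> j" for i j bb
  proof -
    have [measurable]: "(\<lambda>\<omega>. Icen S C i j \<omega> *\<^sub>R fgrad mu V \<theta> i j \<omega>) \<in> borel_measurable (O_alg M (fgrad mu V \<theta>) (Icen S C) i)"
      by (rule vO1[OF that])
    have "(\<lambda>w. (Icen S C i j w *\<^sub>R fgrad mu V \<theta> i j w) \<bullet> bb) \<in> borel_measurable (O_alg M (fgrad mu V \<theta>) (Icen S C) i)"
      by measurable
    then show ?thesis by simp
  qed
  have O2sub: "subalgebra M (O_alg M b (Icen S C) i)" for i
    unfolding O_alg_def
  proof (rule sigma_subalg)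
    have "rv_events M (\<lambda>\<omega>. Icen S C i j \<omega> *\<^sub>R b i j \<omega>) borel \<subseteq> sets M" if "j \<in> {1..}" for j
    proof -
      have [measurable]: "b i j \<in> borel_measurable M" using bM that by simp
      show ?thesis by (rule rv_events_sub) measurable
    qed
    moreover have "rv_events M (Icen S C i j) borel \<subseteq> sets M" for j
      by (rule rv_events_sub) measurable
    ultimately show "(\<Union>j\<in>{1..}. rv_events M (\<lambda>\<omega>. Icen S C i j \<omega> *\<^sub>R b i j \<omega>) borel \<union> rv_events M (Icen S C i j) borel) \<subseteq> sets M"
      by blast
  qed
  have O2pow: "(\<Union>j\<in>{1..}. rv_events M (\<lambda>\<omega>. Icen S C i j \<omega> *\<^sub>R b i j \<omega>) borel \<union> rv_events M (Icen S C i j) borel) \<subseteq> Pow (space M)" for i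
    by (simp add: UN_subset_iff rv_events_pow)
  have IO2: "Icen S C i j \<in> borel_measurable (O_alg M b (Icen S C) i)" if "1 \<le> j" for i j
    unfolding O_alg_def by (rule rv_meas_sigma[OF _ O2pow]) (use that in auto)
  have fO2: "(\<lambda>w. Icen S C i j w * b i j w) \<in> borel_measurable (O_alg M b (Icen S C) i)"
    if "1 \<le> j" for i j
  proof -
    have "(\<lambda>\<omega>. Icen S C i j \<omega> *\<^sub>R b i j \<omega>) \<in> borel_measurable (O_alg M b (Icen S C) i)"
      unfolding O_alg_def by (rule rv_meas_sigma[OF _ O2pow]) (use that in auto)
    then show ?thesis by simp
  qed
  have g2: "integrable M (gobs2 M S C mu V b \<theta> \<sigma>2 n) \<and> (\<integral>\<omega>. gobs2 M S C mu V b \<theta> \<sigma>2 n \<omega> \<partial>M) = 0" for n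
  proof -
    define F where "F i \<omega> = (\<Sum>j=1..tau S C i \<omega>. b i j \<omega> * ((Zres S mu V \<theta> i j \<omega>)\<^sup>2 - \<sigma>2) * Iobs S C i j \<omega>
      + b i j \<omega> * Icen S C i j \<omega> *
          ((\<integral>\<omega>'. ((Zres S mu V \<theta> i j \<omega>')\<^sup>2 - \<sigma>2) * Icen S C i j \<omega>' \<partial>M)
             / (\<integral>\<omega>'. Icen S C i j \<omega>' \<partial>M)))" for i \<omega>
    have Fi: "integrable M (F i) \<and> (\<integral>\<omega>. F i \<omega> \<partial>M) = 0" if i1: "1 \<le> i" for i
    proof -
      have h1: "\<And>j. 1 \<le> j \<Longrightarrow> subalgebra M (G_alg M N S x C i (j - 1))" using Gsub by blast
      have h2: "\<And>j. 1 \<le> j \<Longrightarrow> {w \<in> space M. S i (j - 1) w < C i w} \<in> sets (G_alg M N S x C i (j - 1))" using AG by blast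
      have h3: "\<And>j. 1 \<le> j \<Longrightarrow> b i j \<in> borel_measurable (G_alg M N S x C i (j - 1))" using bG by blast
      have h4: "\<And>j. 1 \<le> j \<Longrightarrow> (\<lambda>w. (Zres S mu V \<theta> i j w)\<^sup>2 - \<sigma>2) \<in> borel_measurable M"
        using ZM by measurable
      have h5: "\<And>j. 1 \<le> j \<Longrightarrow> integrable M (\<lambda>w. (Zres S mu V \<theta> i j w)\<^sup>2 - \<sigma>2)" using Z2int by blast
      have h6: "\<And>j. 1 \<le> j \<Longrightarrow> AE w in M. real_cond_exp M (G_alg M N S x C i (j - 1)) (\<lambda>w. (Zres S mu V \<theta> i j w)\<^sup>2 - \<sigma>2) w = 0"
        using Z2ce' by blast
      have h7: "\<And>j. 1 \<le> j \<Longrightarrow> Icen S C i j \<in> borel_measurable (O_alg M b (Icen S C) i)" using IO2 by blast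
      have h8: "\<And>j. 1 \<le> j \<Longrightarrow> (\<lambda>w. Icen S C i j w * b i j w) \<in> borel_measurable (O_alg M b (Icen S C) i)" using fO2 by blast
      have h9: "\<And>j. 1 \<le> j \<Longrightarrow> AE w in M. Icen S C i j w * real_cond_exp M (O_alg M b (Icen S C) i) (\<lambda>w. (Zres S mu V \<theta> i j w)\<^sup>2 - \<sigma>2) w
              = Icen S C i j w * real_cond_exp M (sig_rv M (Icen S C i j)) (\<lambda>w. (Zres S mu V \<theta> i j w)\<^sup>2 - \<sigma>2) w"
        using B_b[OF i1] by blast
      note R = per_i[where G = "\<lambda>j. G_alg M N S x C i (j - 1)" and Om = "O_alg M b (Icen S C) i"
          and f = "b i" and W = "\<lambda>j w. (Zres S mu V \<theta> i j w)\<^sup>2 - \<sigma>2",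
          OF P S_meas C_meas S0 S_mono C_pos tau_fin h1 h2 h3 h4 h5 h6 O2sub h7 h8 h9 h_int[OF i1]]
      show ?thesis using R unfolding F_def by simp
    qed
    have e: "gobs2 M S C mu V b \<theta> \<sigma>2 n = (\<lambda>\<omega>. \<Sum>i=1..n. F i \<omega>)"
      by (rule ext) (simp add: gobs2_def F_def)
    have "integrable M (\<lambda>\<omega>. \<Sum>i=1..n. F i \<omega>)"
      by (rule Bochner_Integration.integrable_sum) (use Fi in simp)
    moreover have "(\<integral>\<omega>. (\<Sum>i=1..n. F i \<omega>) \<partial>M) = 0"
      by (subst Bochner_Integration.integral_sum) (use Fi in simp_all)
    ultimately show ?thesis unfolding e by simp
  qed
  have g1c: "integrable M (\<lambda>\<omega>. gobs1 M S C mu V \<theta> n \<omega> \<bullet> bb) \<and> (\<integral>\<omega>. gobs1 M S C mu V \<theta> n \<omega> \<bullet> bb \<partial>M) = 0"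
    if bb: "bb \<in> Basis" for n bb
  proof -
    define F where "F i \<omega> = (\<Sum>j=1..tau S C i \<omega>. (fgrad mu V \<theta> i j \<omega> \<bullet> bb) * Zres S mu V \<theta> i j \<omega> * Iobs S C i j \<omega>
      + (fgrad mu V \<theta> i j \<omega> \<bullet> bb) * Icen S C i j \<omega> *
          ((\<integral>\<omega>'. Zres S mu V \<theta> i j \<omega>' * Icen S C i j \<omega>' \<partial>M)
             / (\<integral>\<omega>'. Icen S C i j \<omega>' \<partial>M)))" for i \<omega>
    have Fi: "integrable M (F i) \<and> (\<integral>\<omega>. F i \<omega> \<partial>M) = 0" if i1: "1 \<le> i" for i
    proof -
      have h1: "\<And>j. 1 \<le> j \<Longrightarrow> subalgebra M (G_alg M N S x C i (j - 1))" using Gsub by blast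
      have h2: "\<And>j. 1 \<le> j \<Longrightarrow> {w \<in> space M. S i (j - 1) w < C i w} \<in> sets (G_alg M N S x C i (j - 1))" using AG by blast
      have h3: "\<And>j. 1 \<le> j \<Longrightarrow> (\<lambda>w. fgrad mu V \<theta> i j w \<bullet> bb) \<in> borel_measurable (G_alg M N S x C i (j - 1))"
        using fgG bb by blast
      have h4: "\<And>j. 1 \<le> j \<Longrightarrow> Zres S mu V \<theta> i j \<in> borel_measurable M" using ZM by blast
      have h5: "\<And>j. 1 \<le> j \<Longrightarrow> integrable M (Zres S mu V \<theta> i j)" using Zint by blast
      have h6: "\<And>j. 1 \<le> j \<Longrightarrow> AE w in M. real_cond_exp M (G_alg M N S x C i (j - 1)) (Zres S mu V \<theta> i j) w = 0"
        using Zce' by blast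
      have h7: "\<And>j. 1 \<le> j \<Longrightarrow> Icen S C i j \<in> borel_measurable (O_alg M (fgrad mu V \<theta>) (Icen S C) i)" using IO1 by blast
      have h8: "\<And>j. 1 \<le> j \<Longrightarrow> (\<lambda>w. Icen S C i j w * (fgrad mu V \<theta> i j w \<bullet> bb)) \<in> borel_measurable (O_alg M (fgrad mu V \<theta>) (Icen S C) i)"
        using fO1 by blast
      have h9: "\<And>j. 1 \<le> j \<Longrightarrow> AE w in M. Icen S C i j w * real_cond_exp M (O_alg M (fgrad mu V \<theta>) (Icen S C) i) (Zres S mu V \<theta> i j) w
              = Icen S C i j w * real_cond_exp M (sig_rv M (Icen S C i j)) (Zres S mu V \<theta> i j) w"
        using B_f[OF i1] by blast
      have h10: "(\<integral>\<^sup>+ w. (\<Squnion>j\<in>{1..}. ennreal \<bar>(fgrad mu V \<theta> i j w \<bullet> bb) * Zres S mu V \<theta> i j w\<bar>) * ennreal (real (tau S C i w)) \<partial>M) < \<infinity>"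
      proof (rule le_less_trans[OF _ g_int[OF i1]])
        show "(\<integral>\<^sup>+ w. (\<Squnion>j\<in>{1..}. ennreal \<bar>(fgrad mu V \<theta> i j w \<bullet> bb) * Zres S mu V \<theta> i j w\<bar>) * ennreal (real (tau S C i w)) \<partial>M)
          \<le> (\<integral>\<^sup>+ w. (\<Squnion>j\<in>{1..}. ennreal (norm (Zres S mu V \<theta> i j w *\<^sub>R fgrad mu V \<theta> i j w))) * ennreal (real (tau S C i w)) \<partial>M)"
        proof (intro nn_integral_mono mult_right_mono SUP_mono bexI)
          fix w j
          have "\<bar>(fgrad mu V \<theta> i j w \<bullet> bb) * Zres S mu V \<theta> i j w\<bar> = \<bar>(Zres S mu V \<theta> i j w *\<^sub>R fgrad mu V \<theta> i j w) \<bullet> bb\<bar>"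
            by (simp add: mult.commute)
          also have "\<dots> \<le> norm (Zres S mu V \<theta> i j w *\<^sub>R fgrad mu V \<theta> i j w)" by (rule Basis_le_norm[OF bb])
          finally show "ennreal \<bar>(fgrad mu V \<theta> i j w \<bullet> bb) * Zres S mu V \<theta> i j w\<bar> \<le> ennreal (norm (Zres S mu V \<theta> i j w *\<^sub>R fgrad mu V \<theta> i j w))"
            by (rule ennreal_leI)
        qed auto
      qed
      note R = per_i[where G = "\<lambda>j. G_alg M N S x C i (j - 1)" and Om = "O_alg M (fgrad mu V \<theta>) (Icen S C) i"
          and f = "\<lambda>j w. fgrad mu V \<theta> i j w \<bullet> bb" and W = "Zres S mu V \<theta> i",
          OF P S_meas C_meas S0 S_mono C_pos tau_fin h1 h2 h3 h4 h5 h6 O1sub h7 h8 h9 h10]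
      show ?thesis using R unfolding F_def by simp
    qed
    have e: "(\<lambda>\<omega>. gobs1 M S C mu V \<theta> n \<omega> \<bullet> bb) = (\<lambda>\<omega>. \<Sum>i=1..n. F i \<omega>)"
      by (rule ext) (simp add: gobs1_def F_def inner_sum_left algebra_simps)
    have "integrable M (\<lambda>\<omega>. \<Sum>i=1..n. F i \<omega>)"
      by (rule Bochner_Integration.integrable_sum) (use Fi in simp)
    moreover have "(\<integral>\<omega>. (\<Sum>i=1..n. F i \<omega>) \<partial>M) = 0"
      by (subst Bochner_Integration.integral_sum) (use Fi in simp_all)
    ultimately show ?thesis unfolding e by simp
  qed
  have g1: "integrable M (gobs1 M S C mu V \<theta> n) \<and> (\<integral>\<omega>. gobs1 M S C mu V \<theta> n \<omega> \<partial>M) = 0" for n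
  proof
    have "integrable M (\<lambda>\<omega>. \<Sum>bb\<in>Basis. (gobs1 M S C mu V \<theta> n \<omega> \<bullet> bb) *\<^sub>R bb)"
      by (intro Bochner_Integration.integrable_sum integrable_scaleR_left) (use g1c in simp)
    then show gi: "integrable M (gobs1 M S C mu V \<theta> n)" by (simp add: euclidean_representation)
    show "(\<integral>\<omega>. gobs1 M S C mu V \<theta> n \<omega> \<partial>M) = 0"
    proof (rule euclidean_eqI)
      fix bb :: "real^'p" assume bb: "bb \<in> Basis"
      have "(\<integral>\<omega>. gobs1 M S C mu V \<theta> n \<omega> \<partial>M) \<bullet> bb = (\<integral>\<omega>. gobs1 M S C mu V \<theta> n \<omega> \<bullet> bb \<partial>M)"
        using gi by simp
      also have "\<dots> = 0" using g1c[OF bb] by simp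
      finally show "(\<integral>\<omega>. gobs1 M S C mu V \<theta> n \<omega> \<partial>M) \<bullet> bb = 0 \<bullet> bb" by simp
    qed
  qed
  show ?thesis using g1 g2 by blast
qed

end
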